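(* Let $(X_1,X_2)$ be an extensible pair and $\lambda_1,\lambda_2\in\mathcal H_2^+$ with $\lambda_1\succcurlyeq\lambda_2$. Let $I(\lambda_1,\lambda_2)=\{\gamma\in\mathcal H_2^+:\lambda_1\succcurlyeq\gamma\succcurlyeq\lambda_2\}$ and, for $k$ large, $I^{(k)}(\lambda_1,\lambda_2)=\{\beta\in P^+(Z_k):\lambda_1^{(k)}-\beta\in Q^+(Z_k),\ \beta-\lambda_2^{(k)}\in Q^+(Z_k)\}$. Then (1) $I(\lambda_1,\lambda_2)$ is finite; (2) there exists $N$ such that for all $k\ge N$, $I^{(k)}(\lambda_1,\lambda_2)=\{\gamma^{(k)}:\gamma\in I(\lambda_1,\lambda_2)\}$.
   Context: Marked Dynkin diagram $(X,\xi)$: Dynkin diagram of a symmetrizable generalized Cartan matrix $C(X)$ with distinguished node $\xi$; $\det X=\det C(X)$; $X(-1)$ is $X$ minus $\xi$ ($\det\emptyset=1$); $\Delta_X=\det X-\det X(-1)$. $(X_1,X_2)$ is an extensible pair if $\det X_i\ne0$, $\Delta_i:=\Delta_{X_i}\ne0$, $\gcd(\det X_i,\Delta_i)=1$, $\gcd(\Delta_1,\Delta_2)=1$. $Z_k$: disjoint union of $X_1$ ($d_1$ nodes), a path $A_k$ (nodes $1..k$) and $X_2$ ($d_2$ nodes) plus simple edges $\xi_1$—$1$, $k$—$\xi_2$; $\omega_p,\alpha_p$ fundamental weights and simple roots of $\mathfrak g(Z_k)$; $P^+(Z_k)$ dominant integral weights, $Q^+(Z_k)=\sum\mathbb Z_{\ge0}\alpha_p$.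 Numberings: for $X$ with $d$ nodes, a bijection $\epsilon:N(X)\to\{1..d\}$ with $\epsilon(\xi)=d$; $X(m)$ is $X$ with path $\xi-1-\cdots-m$ attached, numbered $j=\epsilon$ on $X$, $j=d+t$ on the $t$-th new node; $\bar\omega^{(m)}$ the fundamental weight at $j=d+m$. For extensible $X$ there is (earlier work of Kleber and the author) a unique integer sequence $(a_i)$ with $-\Delta_X\omega_p-a_{j(p)}\bar\omega^{(m)}\in Q(X(m))$ for all $m\ge0$ with $\det X(m)\ne0$ and all $p\in X(m)$. Fix numberings $\epsilon_1,\epsilon_2$ and sequences $(a^{(1)}_i),(a^{(2)}_i)$. On $Z_k$: $i=\epsilon_1$ on $X_1$, $d_1+t$ on the $t$-th node of $A_k$, $d_1+d_2+k+1-\epsilon_2$ on $X_2$; $\bar\imath=\epsilon_2$ on $X_2$, $d_2+k+1-t$ on the $t$-th node of $A_k$, $d_1+d_2+k+1-\epsilon_1$ on $X_1$. $\mathcal H_1$: finitely supported integer sequences, $\mathcal H_1^+$ nonnegative ones, $\ell(x)=\max\{i:x_i\ne0\}$; $\mathcal H_2=\mathcal H_1^2$, $\mathcal H_2^+=(\mathcal H_1^+)^2$. For $\gamma=(x,y)$: $\mathrm{ls}(\gamma)=\max(\ell(x),d_1)$, $\mathrm{rs}(\gamma)=\max(\ell(y),d_2)$, $\gamma^{(k)}=\sum_p(x_{i(p)}+y_{\bar\imath(p)})\omega_p$ for $k\ge\mathrm{ls}+\mathrm{rs}-d_1-d_2$. $|\gamma|=\Delta_2\sum x_ia^{(1)}_i-\Delta_1\sum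 y_ia_i^{(2)}$. Partial order: for $\lambda_1,\lambda_2\in\mathcal H_2^+$ with $|\lambda_1|=|\lambda_2|$, let $l=\max(\mathrm{ls}(\lambda_1),\mathrm{ls}(\lambda_2))$, $r=\max(\mathrm{rs}(\lambda_1),\mathrm{rs}(\lambda_2))$; there are integers $b_i$ ($1\le i\le l-1$), $c_j$ ($1\le j\le r-1$), $s$ with $\lambda_1^{(k)}-\lambda_2^{(k)}=\sum_{i(p)\le l-1}b_{i(p)}\alpha_p+\sum_{i(p)\ge l,\bar\imath(p)\ge r}s\alpha_p+\sum_{\bar\imath(p)\le r-1}c_{\bar\imath(p)}\alpha_p$ for all $k\ge l+r-d_1-d_2$. Define $\lambda_1\succcurlyeq\lambda_2$ iff $|\lambda_1|=|\lambda_2|$ and all these $b_i,c_j,s$ are $\ge0$. *)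

theory Defs
  imports "HOL-Combinatorics.Permutations"
begin

text \<open>A marked Dynkin diagram (X,xi) with d nodes together with a
numbering epsilon (epsilon(xi) = d) is represented by its generalized Cartan matrix
C :: nat => nat => int, where C i j is the entry a_{ij} = <alpha_i^vee, alpha_j>
for the nodes numbered i, j in {1..d}; the marked node is d.
Weights of a diagram with n nodes are written in the basis of fundamental weights,
as integer coordinate functions on {1..n}; alpha_j has coordinates (C i j)_i.\<close>

definition detm :: "nat \<Rightarrow> (nat \<Rightarrow> nat \<Rightarrow> int) \<Rightarrow> int" where
  "detm n C = (\<Sum>p\<in>{p. p permutes {1..n}}. sign p * (\<Prod>i\<in>{1..n}. C i (p i)))"

definition sym_gcm :: "(nat \<Rightarrow> nat \<Rightarrow> int) \<Rightarrow> nat \<Rightarrow> bool" where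
  "sym_gcm C d \<longleftrightarrow>
     (\<forall>i\<in>{1..d}. C i i = 2) \<and>
     (\<forall>i\<in>{1..d}. \<forall>j\<in>{1..d}. i \<noteq> j \<longrightarrow> C i j \<le> 0 \<and> (C i j = 0 \<longleftrightarrow> C j i = 0)) \<and>
     (\<exists>D::nat \<Rightarrow> int. (\<forall>i\<in>{1..d}. D i > 0) \<and>
        (\<forall>i\<in>{1..d}. \<forall>j\<in>{1..d}. D i * C i j = D j * C j i))"

text \<open>Delta_X = det X - det X(-1); X(-1) is X minus the marked node d.\<close>
definition Delta :: "(nat \<Rightarrow> nat \<Rightarrow> int) \<Rightarrow> nat \<Rightarrow> int" where
  "Delta C d = detm d C - detm (d - 1) C"

definition extensible :: "(nat \<Rightarrow> nat \<Rightarrow> int) \<Rightarrow> nat \<Rightarrow> bool" where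
  "extensible C d \<longleftrightarrow> detm d C \<noteq> 0 \<and> Delta C d \<noteq> 0 \<and> gcd (detm d C) (Delta C d) = 1"

definition extensible_pair ::
  "(nat \<Rightarrow> nat \<Rightarrow> int) \<Rightarrow> nat \<Rightarrow> (nat \<Rightarrow> nat \<Rightarrow> int) \<Rightarrow> nat \<Rightarrow> bool" where
  "extensible_pair C1 d1 C2 d2 \<longleftrightarrow>
     extensible C1 d1 \<and> extensible C2 d2 \<and> gcd (Delta C1 d1) (Delta C2 d2) = 1"

definition in_Q :: "nat \<Rightarrow> (nat \<Rightarrow> nat \<Rightarrow> int) \<Rightarrow> (nat \<Rightarrow> int) \<Rightarrow> bool" where
  "in_Q n C v \<longleftrightarrow> (\<exists>c::nat \<Rightarrow> int. \<forall>i\<in>{1..n}. v i = (\<Sum>j\<in>{1..n}. C i j * c j))"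

definition in_Qplus :: "nat \<Rightarrow> (nat \<Rightarrow> nat \<Rightarrow> int) \<Rightarrow> (nat \<Rightarrow> int) \<Rightarrow> bool" where
  "in_Qplus n C v \<longleftrightarrow> (\<exists>c::nat \<Rightarrow> int. (\<forall>j\<in>{1..n}. c j \<ge> 0) \<and>
       (\<forall>i\<in>{1..n}. v i = (\<Sum>j\<in>{1..n}. C i j * c j)))"

text \<open>X(m): the path d - (d+1) - ... - (d+m) attached at the marked node d
 (entries relevant on {1..d+m}).\<close>
definition ext_path :: "(nat \<Rightarrow> nat \<Rightarrow> int) \<Rightarrow> nat \<Rightarrow> nat \<Rightarrow> nat \<Rightarrow> int" where
  "ext_path C d i j =
     (if i \<le> d \<and> j \<le> d then C i j
      else if i = j then 2
      else if (i = j + 1 \<or> j = i + 1) \<and> d \<le> min i j then -1 else 0)"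

definition a_seq_ok :: "(nat \<Rightarrow> nat \<Rightarrow> int) \<Rightarrow> nat \<Rightarrow> (nat \<Rightarrow> int) \<Rightarrow> bool" where
  "a_seq_ok C d a \<longleftrightarrow>
     (\<forall>m p. detm (d + m) (ext_path C d) \<noteq> 0 \<longrightarrow> p \<in> {1..d + m} \<longrightarrow>
        in_Q (d + m) (ext_path C d)
          (\<lambda>i. - Delta C d * (if i = p then 1 else 0) - a p * (if i = d + m then 1 else 0)))"

text \<open>Cartan matrix of Z_k, in the numbering i of the paper (nodes {1..d1+d2+k});
 the node of X2 numbered epsilon_2 = e sits at i = d1+d2+k+1-e, and ibar = d1+d2+k+1-i.\<close>
definition Zmat ::
  "(nat \<Rightarrow> nat \<Rightarrow> int) \<Rightarrow> nat \<Rightarrow> (nat \<Rightarrow> nat \<Rightarrow> int) \<Rightarrow> nat \<Rightarrow> nat \<Rightarrow> nat \<Rightarrow> nat \<Rightarrow> int" where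
  "Zmat C1 d1 C2 d2 k i j =
     (let n = d1 + d2 + k in
      if i \<le> d1 \<and> j \<le> d1 then C1 i j
      else if d1 + k < i \<and> d1 + k < j then C2 (n + 1 - i) (n + 1 - j)
      else if i = j then 2
      else if (i = j + 1 \<or> j = i + 1) \<and> d1 \<le> min i j \<and> max i j \<le> d1 + k + 1 then -1
      else 0)"

text \<open>Finitely supported integer sequences indexed by i >= 1 (value at 0 fixed to 0).\<close>
definition H1plus :: "(nat \<Rightarrow> int) set" where
  "H1plus = {x. x 0 = 0 \<and> finite {i. x i \<noteq> 0} \<and> (\<forall>i. x i \<ge> 0)}"

definition H2plus :: "((nat \<Rightarrow> int) \<times> (nat \<Rightarrow> int)) set" where
  "H2plus = H1plus \<times> H1plus"

definition ell :: "(nat \<Rightarrow> int) \<Rightarrow> nat" where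
  "ell x = Max (insert 0 {i. x i \<noteq> 0})"

definition ls :: "nat \<Rightarrow> (nat \<Rightarrow> int) \<times> (nat \<Rightarrow> int) \<Rightarrow> nat" where
  "ls d1 \<gamma> = max (ell (fst \<gamma>)) d1"

definition rs :: "nat \<Rightarrow> (nat \<Rightarrow> int) \<times> (nat \<Rightarrow> int) \<Rightarrow> nat" where
  "rs d2 \<gamma> = max (ell (snd \<gamma>)) d2"

definition lift :: "nat \<Rightarrow> nat \<Rightarrow> nat \<Rightarrow> (nat \<Rightarrow> int) \<times> (nat \<Rightarrow> int) \<Rightarrow> nat \<Rightarrow> int" where
  "lift d1 d2 k \<gamma> = (\<lambda>i. if i \<in> {1..d1 + d2 + k}
                          then fst \<gamma> i + snd \<gamma> (d1 + d2 + k + 1 - i) else 0)"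

definition gnorm ::
  "(nat \<Rightarrow> nat \<Rightarrow> int) \<Rightarrow> nat \<Rightarrow> (nat \<Rightarrow> nat \<Rightarrow> int) \<Rightarrow> nat \<Rightarrow> (nat \<Rightarrow> int) \<Rightarrow> (nat \<Rightarrow> int)
     \<Rightarrow> (nat \<Rightarrow> int) \<times> (nat \<Rightarrow> int) \<Rightarrow> int" where
  "gnorm C1 d1 C2 d2 a1 a2 \<gamma> =
     Delta C2 d2 * (\<Sum>i\<in>{1..ell (fst \<gamma>)}. fst \<gamma> i * a1 i)
     - Delta C1 d1 * (\<Sum>i\<in>{1..ell (snd \<gamma>)}. snd \<gamma> i * a2 i)"

definition succeq ::
  "(nat \<Rightarrow> nat \<Rightarrow> int) \<Rightarrow> nat \<Rightarrow> (nat \<Rightarrow> nat \<Rightarrow> int) \<Rightarrow> nat \<Rightarrow> (nat \<Rightarrow> int) \<Rightarrow> (nat \<Rightarrow> int)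
     \<Rightarrow> (nat \<Rightarrow> int) \<times> (nat \<Rightarrow> int) \<Rightarrow> (nat \<Rightarrow> int) \<times> (nat \<Rightarrow> int) \<Rightarrow> bool" where
  "succeq C1 d1 C2 d2 a1 a2 lam1 lam2 \<longleftrightarrow>
     lam1 \<in> H2plus \<and> lam2 \<in> H2plus \<and>
     gnorm C1 d1 C2 d2 a1 a2 lam1 = gnorm C1 d1 C2 d2 a1 a2 lam2 \<and>
     (let l = max (ls d1 lam1) (ls d1 lam2); r = max (rs d2 lam1) (rs d2 lam2) in
      \<exists>(b::nat \<Rightarrow> int) (c::nat \<Rightarrow> int) (s::int).
        (\<forall>i\<in>{1..l - 1}. b i \<ge> 0) \<and> (\<forall>j\<in>{1..r - 1}. c j \<ge> 0) \<and> s \<ge> 0 \<and>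
        (\<forall>k. l + r - d1 - d2 \<le> k \<longrightarrow>
           (let n = d1 + d2 + k in
            \<forall>i\<in>{1..n}. lift d1 d2 k lam1 i - lift d1 d2 k lam2 i =
              (\<Sum>j\<in>{1..n}. Zmat C1 d1 C2 d2 k i j *
                 (if j \<le> l - 1 then b j
                  else if n + 1 - j \<le> r - 1 then c (n + 1 - j) else s)))))"

definition Iset ::
  "(nat \<Rightarrow> nat \<Rightarrow> int) \<Rightarrow> nat \<Rightarrow> (nat \<Rightarrow> nat \<Rightarrow> int) \<Rightarrow> nat \<Rightarrow> (nat \<Rightarrow> int) \<Rightarrow> (nat \<Rightarrow> int)
     \<Rightarrow> (nat \<Rightarrow> int) \<times> (nat \<Rightarrow> int) \<Rightarrow> (nat \<Rightarrow> int) \<times> (nat \<Rightarrow> int)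
     \<Rightarrow> ((nat \<Rightarrow> int) \<times> (nat \<Rightarrow> int)) set" where
  "Iset C1 d1 C2 d2 a1 a2 lam1 lam2 =
     {\<gamma> \<in> H2plus. succeq C1 d1 C2 d2 a1 a2 lam1 \<gamma> \<and> succeq C1 d1 C2 d2 a1 a2 \<gamma> lam2}"

definition Ik ::
  "(nat \<Rightarrow> nat \<Rightarrow> int) \<Rightarrow> nat \<Rightarrow> (nat \<Rightarrow> nat \<Rightarrow> int) \<Rightarrow> nat \<Rightarrow> nat
     \<Rightarrow> (nat \<Rightarrow> int) \<times> (nat \<Rightarrow> int) \<Rightarrow> (nat \<Rightarrow> int) \<times> (nat \<Rightarrow> int) \<Rightarrow> (nat \<Rightarrow> int) set" where
  "Ik C1 d1 C2 d2 k lam1 lam2 =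
     (let n = d1 + d2 + k in
      {\<beta>. (\<forall>i. i \<notin> {1..n} \<longrightarrow> \<beta> i = 0) \<and> (\<forall>i\<in>{1..n}. \<beta> i \<ge> 0) \<and>
           in_Qplus n (Zmat C1 d1 C2 d2 k) (\<lambda>i. lift d1 d2 k lam1 i - \<beta> i) \<and>
           in_Qplus n (Zmat C1 d1 C2 d2 k) (\<lambda>i. \<beta> i - lift d1 d2 k lam2 i)})"

end

theory Submission
  imports Defs "Jordan_Normal_Form.Determinant"
begin


lemma detm_jnf:
  "detm n C = det (mat n n (\<lambda>(i,j). C (Suc i) (Suc j)))"
proof -
  let ?f = "\<lambda>x::nat. x - 1"
  have bij1: "bij_betw ?f {1..n} {0..<n}"
    by (rule bij_betw_byWitness[where f' = Suc]) auto
  have bij2: "bij_betw Suc {0..<n} {1..n}"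
    by (rule bij_betw_byWitness[where f' = ?f]) auto
  have "det (mat n n (\<lambda>(i,j). C (Suc i) (Suc j))) =
     (\<Sum>q\<in>{q. q permutes {0..<n}}. of_int (sign q) * (\<Prod>i=0..<n. C (Suc i) (Suc (q i))))"
    unfolding det_def by (auto intro!: sum.cong prod.cong)
  also have "\<dots> = (\<Sum>p\<in>{p. p permutes {1..n}}. sign p * (\<Prod>i\<in>{1..n}. C i (p i)))"
  proof (rule sym, rule sum.reindex_bij_witness[where j = "map_permutation {1..n} ?f" and i = "map_permutation {0..<n} Suc"])
    fix p assume p: "p \<in> {p. p permutes {1..n}}"
    show "map_permutation {0..<n} Suc (map_permutation {1..n} ?f p) = p"
      by (rule map_permutation_compose_inv[OF bij1]) (use p in auto)
    show "map_permutation {1..n} ?f p \<in> {q. q permutes {0..<n}}"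
      using map_permutation_permutes[OF bij1] p by auto
  next
    fix q assume q: "q \<in> {q. q permutes {0..<n}}"
    show "map_permutation {1..n} ?f (map_permutation {0..<n} Suc q) = q"
      by (rule map_permutation_compose_inv[OF bij2]) (use q in auto)
    show "map_permutation {0..<n} Suc q \<in> {p. p permutes {1..n}}"
      using map_permutation_permutes[OF bij2] q by auto
  next
    fix p assume p: "p \<in> {p. p permutes {1..n}}"
    let ?q = "map_permutation {1..n} ?f p"
    have sg: "sign ?q = sign p"
      by (rule sign_map_permutation) (use p bij1 in \<open>auto simp: bij_betw_def\<close>)
    have inj: "inj_on ?f {1..n}" using bij1 by (auto simp: bij_betw_def)
    have qv: "?q i = p (Suc i) - 1" if "i < n" for i
      using map_permutation_apply[OF inj, of "Suc i" p] that by simp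
    have pin: "p (Suc i) \<in> {1..n}" if "i < n" for i
      using p that permutes_in_image[of p "{1..n}" "Suc i"] by auto
    have "(\<Prod>i=0..<n. C (Suc i) (Suc (?q i))) = (\<Prod>i=0..<n. C (Suc i) (p (Suc i)))"
    proof (rule prod.cong)
      fix i assume "i \<in> {0..<n}"
      then have "i < n" by simp
      then show "C (Suc i) (Suc (?q i)) = C (Suc i) (p (Suc i))"
        using qv[of i] pin[of i] by (simp add: Suc_diff_1)
    qed simp
    also have "\<dots> = (\<Prod>i\<in>Suc ` {0..<n}. C i (p i))"
      by (subst prod.reindex) auto
    also have "\<dots> = (\<Prod>i\<in>{1..n}. C i (p i))"
      by (simp add: atLeastLessThanSuc_atLeastAtMost)
    finally show "of_int (sign ?q) * (\<Prod>i=0..<n. C (Suc i) (Suc (?q i))) = sign p * (\<Prod>i\<in>{1..n}. C i (p i))"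
      using sg by simp
  qed
  finally show ?thesis unfolding detm_def by simp
qed



lemma sum_shift1: "(\<Sum>j\<in>{1..n}. f j) = (\<Sum>j<n. f (Suc j)) " for f :: "nat \<Rightarrow> int"
proof -
  have "(\<Sum>j<n. f (Suc j)) = (\<Sum>j\<in>Suc ` {..<n}. f j)" by (subst sum.reindex) auto
  also have "Suc ` {..<n} = {1..n}" by (simp add: lessThan_atLeast0 atLeastLessThanSuc_atLeastAtMost)
  finally show ?thesis by simp
qed

lemma adj_core:
  fixes C :: "nat \<Rightarrow> nat \<Rightarrow> int" and d :: nat and g :: "nat \<Rightarrow> int"
  defines "M \<equiv> mat d d (\<lambda>(i,j). C (Suc i) (Suc j))"
  assumes j: "j < d"
  shows "detm d C * g (Suc j) =
     (\<Sum>k<d. adj_mat M $$ (j,k) * (\<Sum>l\<in>{1..d}. C (Suc k) l * g l))"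
proof -
  define v where "v = vec d (\<lambda>j. g (Suc j))"
  have M: "M \<in> carrier_mat d d" unfolding M_def by simp
  have v: "v \<in> carrier_vec d" unfolding v_def by simp
  have Mv: "M *\<^sub>v v = vec d (\<lambda>i. \<Sum>l\<in>{1..d}. C (Suc i) l * g l)"
  proof (rule eq_vecI)
    fix i assume "i < dim_vec (vec d (\<lambda>i. \<Sum>l\<in>{1..d}. C (Suc i) l * g l))"
    then have i: "i < d" by simp
    have "(M *\<^sub>v v) $ i = (\<Sum>l<d. C (Suc i) (Suc l) * g (Suc l))"
      using i by (simp add: M_def v_def mult_mat_vec_def scalar_prod_def lessThan_atLeast0)
    also have "\<dots> = (\<Sum>l\<in>{1..d}. C (Suc i) l * g l)" by (rule sum_shift1[symmetric])
    finally show "(M *\<^sub>v v) $ i = vec d (\<lambda>i. \<Sum>l\<in>{1..d}. C (Suc i) l * g l) $ i" using i by simp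
  qed (simp add: M_def)
  have "adj_mat M *\<^sub>v (M *\<^sub>v v) = (adj_mat M * M) *\<^sub>v v"
    using adj_mat(1)[OF M] M v by (intro assoc_mult_mat_vec[symmetric])
  also have "\<dots> = (det M \<cdot>\<^sub>m 1\<^sub>m d) *\<^sub>v v" using adj_mat(3)[OF M] by simp
  finally have "(adj_mat M *\<^sub>v (M *\<^sub>v v)) $ j = ((det M \<cdot>\<^sub>m 1\<^sub>m d) *\<^sub>v v) $ j" by (rule arg_cong)
  also have "\<dots> = (\<Sum>i = 0..<d. det M * (if i = j then 1 else 0) * v $ i)"
    using j v by (simp add: mult_mat_vec_def scalar_prod_def)
  also have "\<dots> = (\<Sum>i = 0..<d. if i = j then det M * v $ i else 0)"
    by (rule sum.cong) auto
  also have "\<dots> = det M * v $ j" using j by simp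
  finally have "(adj_mat M *\<^sub>v (M *\<^sub>v v)) $ j = det M * v $ j" .
  moreover have "(adj_mat M *\<^sub>v (M *\<^sub>v v)) $ j = (\<Sum>k<d. adj_mat M $$ (j,k) * (\<Sum>l\<in>{1..d}. C (Suc k) l * g l))"
    using adj_mat(1)[OF M] j unfolding Mv by (simp add: mult_mat_vec_def scalar_prod_def lessThan_atLeast0)
  ultimately show ?thesis
    using j by (simp add: detm_jnf M_def[symmetric] v_def)
qed



lemma X_kernel:
  fixes C :: "nat \<Rightarrow> nat \<Rightarrow> int" and g :: "nat \<Rightarrow> int"
  assumes D: "detm d C \<noteq> 0" and h: "\<forall>i\<in>{1..d}. (\<Sum>j\<in>{1..d}. C i j * g j) = 0"
  shows "\<forall>j\<in>{1..d}. g j = 0"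
proof
  fix j assume j: "j \<in> {1..d}"
  then obtain j' where jj: "j = Suc j'" "j' < d" by (cases j) auto
  have "detm d C * g (Suc j') = 0"
    using adj_core[OF jj(2), of C g] h by simp
  then show "g j = 0" using D jj by simp
qed

lemma X_cramer:
  fixes C :: "nat \<Rightarrow> nat \<Rightarrow> int" and g :: "nat \<Rightarrow> int"
  assumes d: "d \<ge> 1" and h: "\<forall>i\<in>{1..d}. (\<Sum>j\<in>{1..d}. C i j * g j) = (if i = d then r else 0)"
  shows "g d * detm d C = r * detm (d - 1) C"
proof -
  define M where "M = mat d d (\<lambda>(i,j). C (Suc i) (Suc j))"
  have jd: "d - 1 < d" using d by simp
  have "detm d C * g (Suc (d - 1)) =
     (\<Sum>k<d. adj_mat M $$ (d - 1,k) * (\<Sum>l\<in>{1..d}. C (Suc k) l * g l))"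
    using adj_core[OF jd, of C g] unfolding M_def by simp
  also have "\<dots> = (\<Sum>k<d. if k = d - 1 then adj_mat M $$ (d - 1,k) * r else 0)"
    by (rule sum.cong) (use h d in auto)
  also have "\<dots> = adj_mat M $$ (d - 1, d - 1) * r" using jd by simp
  also have "adj_mat M $$ (d - 1, d - 1) = det (mat_delete M (d - 1) (d - 1))"
    using jd by (simp add: adj_mat_def M_def cofactor_def)
  also have "mat_delete M (d - 1) (d - 1) = mat (d - 1) (d - 1) (\<lambda>(i,j). C (Suc i) (Suc j))"
    by (rule eq_matI) (auto simp: mat_delete_def M_def)
  finally show ?thesis using d by (simp add: detm_jnf mult.commute)
qed



lemma detm_nonzero_from_kernel:
  fixes C :: "nat \<Rightarrow> nat \<Rightarrow> int"
  assumes K: "\<And>g. \<forall>i\<in>{1..n}. (\<Sum>j\<in>{1..n}. C i j * g j) = 0 \<Longrightarrow> \<forall>j\<in>{1..n}. g j = 0"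
  shows "detm n C \<noteq> 0"
proof
  assume "detm n C = 0"
  define M where "M = mat n n (\<lambda>(i,j). C (Suc i) (Suc j))"
  have M: "M \<in> carrier_mat n n" unfolding M_def by simp
  have "det M = 0" using \<open>detm n C = 0\<close> by (simp add: detm_jnf M_def)
  then obtain v where v: "v \<in> carrier_vec n" "v \<noteq> 0\<^sub>v n" "M *\<^sub>v v = 0\<^sub>v n"
    using det_0_iff_vec_prod_zero[OF M] by blast
  define g where "g = (\<lambda>j. v $ (j - 1))"
  have "\<forall>i\<in>{1..n}. (\<Sum>j\<in>{1..n}. C i j * g j) = 0"
  proof
    fix i assume i: "i \<in> {1..n}"
    then obtain i' where ii: "i = Suc i'" "i' < n" by (cases i) auto
    have "(\<Sum>j\<in>{1..n}. C i j * g j) = (\<Sum>l<n. C (Suc i') (Suc l) * v $ l)"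
      using sum_shift1[of "\<lambda>j. C i j * g j" n] by (simp add: ii g_def)
    also have "\<dots> = (M *\<^sub>v v) $ i'"
      using ii v(1) by (simp add: M_def mult_mat_vec_def scalar_prod_def lessThan_atLeast0)
    also have "\<dots> = 0" using v ii by simp
    finally show "(\<Sum>j\<in>{1..n}. C i j * g j) = 0" .
  qed
  then have gz: "\<forall>j\<in>{1..n}. g j = 0" by (rule K)
  have "v = 0\<^sub>v n"
  proof (rule eq_vecI)
    fix i assume "i < dim_vec (0\<^sub>v n)"
    then have i: "i < n" by simp
    then have "g (Suc i) = 0" using gz by simp
    then show "v $ i = 0\<^sub>v n $ i" using i by (simp add: g_def)
  qed (use v in simp)
  with v show False by simp
qed

definition zrow :: "(nat \<Rightarrow> nat \<Rightarrow> int) \<Rightarrow> nat \<Rightarrow> (nat \<Rightarrow> nat \<Rightarrow> int) \<Rightarrow> nat \<Rightarrow> nat \<Rightarrow> (nat \<Rightarrow> int) \<Rightarrow> nat \<Rightarrow> int" where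
  "zrow C1 d1 C2 d2 k g i =
    (if i \<le> d1 then (\<Sum>j\<in>{1..d1}. C1 i j * g j) - (if i = d1 then g (d1 + 1) else 0)
     else if i \<le> d1 + k then 2 * g i - g (i - 1) - g (i + 1)
     else (\<Sum>j\<in>{1..d2}. C2 (d1 + d2 + k + 1 - i) j * g (d1 + d2 + k + 1 - j))
          - (if i = d1 + k + 1 then g (d1 + k) else 0))"

lemma sum_if_le: "(\<Sum>j\<in>{1..n}. if j \<le> m then f j else 0) = (\<Sum>j\<in>{1..m}. f j)" if "m \<le> n"
  for f :: "nat \<Rightarrow> int"
proof -
  have "(\<Sum>j\<in>{1..n}. if j \<le> m then f j else 0) = (\<Sum>j\<in>{j\<in>{1..n}. j \<le> m}. f j)"
    by (rule sum.inter_filter[symmetric]) simp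
  also have "{j\<in>{1..n}. j \<le> m} = {1..m}" using that by auto
  finally show ?thesis .
qed

lemma sum_if_le': "m \<le> n \<Longrightarrow> (\<Sum>j\<in>{Suc 0..n}. if j \<le> m then f j else 0) = (\<Sum>j\<in>{Suc 0..m}. f j)"
  for f :: "nat \<Rightarrow> int" using sum_if_le[of m n f] by simp

lemma sum_if_gt: "(\<Sum>j\<in>{1..n}. if m < j then f j else 0) = (\<Sum>j\<in>{1..n - m}. f (n + 1 - j))" if "m \<le> n"
  for f :: "nat \<Rightarrow> int"
proof -
  have "(\<Sum>j\<in>{1..n}. if m < j then f j else 0) = (\<Sum>j\<in>{j\<in>{1..n}. m < j}. f j)"
    by (rule sum.inter_filter[symmetric]) simp
  also have "\<dots> = (\<Sum>j\<in>{1..n - m}. f (n + 1 - j))"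
    by (rule sum.reindex_bij_witness[where i = "\<lambda>j. n + 1 - j" and j = "\<lambda>j. n + 1 - j"]) (use that in auto)
  finally show ?thesis .
qed

lemma Zrow:
  assumes d1: "d1 \<ge> 1" and d2: "d2 \<ge> 1" and i: "i \<in> {1..d1 + d2 + k}"
  shows "(\<Sum>j\<in>{1..d1 + d2 + k}. Zmat C1 d1 C2 d2 k i j * g j) = zrow C1 d1 C2 d2 k g i"
proof -
  let ?n = "d1 + d2 + k"
  consider (L) "i \<le> d1" | (P) "d1 < i" "i \<le> d1 + k" | (R) "d1 + k < i" by linarith
  then show ?thesis
  proof cases
    case L
    have "(\<Sum>j\<in>{1..?n}. Zmat C1 d1 C2 d2 k i j * g j) =
          (\<Sum>j\<in>{1..?n}. (if j \<le> d1 then C1 i j * g j else 0) + (if j = d1 + 1 then (if i = d1 then - g j else 0) else 0))"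
      by (rule sum.cong) (use L in \<open>auto simp: Zmat_def Let_def\<close>)
    also have "\<dots> = (\<Sum>j\<in>{1..d1}. C1 i j * g j) + (if i = d1 then - g (d1 + 1) else 0)"
      by (use d2 in \<open>simp add: sum.distrib sum_if_le'\<close>)
    finally show ?thesis using L by (simp add: zrow_def)
  next
    case P
    have "(\<Sum>j\<in>{1..?n}. Zmat C1 d1 C2 d2 k i j * g j) =
          (\<Sum>j\<in>{1..?n}. (if j = i then 2 * g j else 0) + (if j = i - 1 then - g j else 0) + (if j = i + 1 then - g j else 0))"
      by (rule sum.cong) (use P in \<open>auto simp: Zmat_def Let_def\<close>)
    also have "\<dots> = 2 * g i - g (i - 1) - g (i + 1)"
    proof -
      have "Suc 0 \<le> i - Suc 0" "i - Suc 0 \<le> ?n" "i + 1 \<le> ?n" using P d1 d2 by auto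
      then show ?thesis using P i by (simp add: sum.distrib)
    qed
    finally show ?thesis using P by (simp add: zrow_def)
  next
    case R
    have "(\<Sum>j\<in>{1..?n}. Zmat C1 d1 C2 d2 k i j * g j) =
          (\<Sum>j\<in>{1..?n}. (if d1 + k < j then C2 (?n + 1 - i) (?n + 1 - j) * g j else 0) + (if j = d1 + k then (if i = d1 + k + 1 then - g j else 0) else 0))"
      by (rule sum.cong) (use R in \<open>auto simp: Zmat_def Let_def\<close>)
    also have "\<dots> = (\<Sum>j\<in>{1..d2}. C2 (?n + 1 - i) j * g (?n + 1 - j)) + (if i = d1 + k + 1 then - g (d1 + k) else 0)"
    proof -
      have "(\<Sum>j\<in>{1..?n}. if d1 + k < j then C2 (?n + 1 - i) (?n + 1 - j) * g j else 0)
          = (\<Sum>j\<in>{1..?n - (d1 + k)}. C2 (?n + 1 - i) (?n + 1 - (?n + 1 - j)) * g (?n + 1 - j))"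
        by (rule sum_if_gt) simp
      also have "\<dots> = (\<Sum>j\<in>{1..d2}. C2 (?n + 1 - i) j * g (?n + 1 - j))"
        by (rule sum.cong) auto
      finally show ?thesis using d1 by (simp add: sum.distrib)
    qed
    finally show ?thesis using R by (simp add: zrow_def)
  qed
qed



lemma linear_path:
  fixes g :: "nat \<Rightarrow> int"
  assumes h: "\<And>i. a < i \<Longrightarrow> i < b \<Longrightarrow> 2 * g i - g (i - 1) - g (i + 1) = 0"
  shows "a + j \<le> b \<Longrightarrow> g (a + j) = g a + int j * (g (a + 1) - g a)"
proof (induction j rule: less_induct)
  case (less j)
  show ?case
  proof (cases "j \<le> 1")
    case True
    then show ?thesis by (cases j) auto
  next
    case False
    then obtain j' where j': "j = Suc (Suc j')" by (cases j; cases "j - 1") auto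
    have e1: "g (a + j') = g a + int j' * (g (a + 1) - g a)" using less.IH[of j'] less.prems j' by simp
    have e2: "g (a + Suc j') = g a + int (Suc j') * (g (a + 1) - g a)" using less.IH[of "Suc j'"] less.prems j' by simp
    have "2 * g (a + Suc j') - g (a + Suc j' - 1) - g (a + Suc j' + 1) = 0"
      by (rule h) (use less j' in auto)
    then have "g (a + j) = 2 * g (a + Suc j') - g (a + j')" using j' by simp
    then show ?thesis using e1 e2 j' by (simp add: algebra_simps)
  qed
qed

lemma Xrow:
  assumes d: "d \<ge> 1" and m: "m \<ge> 1" and i: "i \<in> {1..d + m}"
  shows "(\<Sum>j\<in>{1..d + m}. ext_path C d i j * g j) =
    (if i \<le> d then (\<Sum>j\<in>{1..d}. C i j * g j) - (if i = d then g (d + 1) else 0)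
     else 2 * g i - g (i - 1) - (if i = d + m then 0 else g (i + 1)))"
proof (cases "i \<le> d")
  case True
  have "(\<Sum>j\<in>{1..d + m}. ext_path C d i j * g j) =
        (\<Sum>j\<in>{1..d + m}. (if j \<le> d then C i j * g j else 0) + (if j = d + 1 then (if i = d then - g j else 0) else 0))"
    by (rule sum.cong) (use True in \<open>auto simp: ext_path_def\<close>)
  also have "\<dots> = (\<Sum>j\<in>{1..d}. C i j * g j) + (if i = d then - g (d + 1) else 0)"
    by (use m in \<open>simp add: sum.distrib sum_if_le'\<close>)
  finally show ?thesis using True by simp
next
  case False
  have "(\<Sum>j\<in>{1..d + m}. ext_path C d i j * g j) =
        (\<Sum>j\<in>{1..d + m}. (if j = i then 2 * g j else 0) + (if j = i - 1 then - g j else 0) + (if j = i + 1 then - g j else 0))"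
    by (rule sum.cong) (use False in \<open>auto simp: ext_path_def\<close>)
  also have "\<dots> = 2 * g i - g (i - 1) - (if i = d + m then 0 else g (i + 1))"
  proof -
    have "Suc 0 \<le> i - Suc 0" "i - Suc 0 \<le> d + m" using False d i by auto
    then show ?thesis using False i by (auto simp add: sum.distrib)
  qed
  finally show ?thesis using False by simp
qed

lemma ext_dvd:
  fixes C :: "nat \<Rightarrow> nat \<Rightarrow> int" and g :: "nat \<Rightarrow> int"
  assumes d: "d \<ge> 1" and m: "m \<ge> 1"
    and h: "\<forall>i\<in>{1..d + m}. (\<Sum>j\<in>{1..d + m}. ext_path C d i j * g j) = (if i = d + m then t else 0)"
  shows "t * Delta C d = (g (d + 1) - g d) * (detm d C + int m * Delta C d)"
    and "\<forall>j\<le>m. g (d + j) = g d + int j * (g (d + 1) - g d)"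
    and "\<forall>i\<in>{1..d}. (\<Sum>j\<in>{1..d}. C i j * g j) = (if i = d then g (d + 1) else 0)"
proof -
  have row: "\<And>i. i \<in> {1..d + m} \<Longrightarrow> (if i \<le> d then (\<Sum>j\<in>{1..d}. C i j * g j) - (if i = d then g (d + 1) else 0)
     else 2 * g i - g (i - 1) - (if i = d + m then 0 else g (i + 1))) = (if i = d + m then t else 0)"
    by (rule trans[OF Xrow[OF d m, of _ C g, symmetric]], assumption) (use h in blast)
  show X: "\<forall>i\<in>{1..d}. (\<Sum>j\<in>{1..d}. C i j * g j) = (if i = d then g (d + 1) else 0)"
  proof
    fix i assume i: "i \<in> {1..d}"
    then have "i \<in> {1..d + m}" "i \<noteq> d + m" using m by auto
    then show "(\<Sum>j\<in>{1..d}. C i j * g j) = (if i = d then g (d + 1) else 0)"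
      using row[of i] i by (auto split: if_splits)
  qed
  have cr: "g d * detm d C = g (d + 1) * detm (d - 1) C" by (rule X_cramer[OF d X])
  have lin: "\<And>i. d < i \<Longrightarrow> i < d + m \<Longrightarrow> 2 * g i - g (i - 1) - g (i + 1) = 0"
  proof -
    fix i assume a: "d < i" "i < d + m"
    then have "i \<in> {1..d + m}" "\<not> i \<le> d" "i \<noteq> d + m" using d by auto
    then show "2 * g i - g (i - 1) - g (i + 1) = 0" using row[of i] by simp
  qed
  show L: "\<forall>j\<le>m. g (d + j) = g d + int j * (g (d + 1) - g d)"
    using linear_path[OF lin] by simp
  have last: "2 * g (d + m) - g (d + m - 1) = t" using row[of "d + m"] d m by simp
  have "g (d + m - 1) = g d + int (m - 1) * (g (d + 1) - g d)"
    using L[rule_format, of "m - 1"] m by (simp add: add_diff_assoc)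
  then have t: "t = g d + (int m + 1) * (g (d + 1) - g d)"
    using last L[rule_format, of m] m by (simp add: of_nat_diff algebra_simps)
  show "t * Delta C d = (g (d + 1) - g d) * (detm d C + int m * Delta C d)"
    unfolding Delta_def t using cr by (simp add: algebra_simps)
qed



lemma in_Q_cong: "in_Q n C v \<Longrightarrow> (\<And>i. i \<in> {1..n} \<Longrightarrow> v i = w i) \<Longrightarrow> in_Q n C w"
  unfolding in_Q_def by auto

lemma in_Q_lin: "in_Q n C v \<Longrightarrow> in_Q n C w \<Longrightarrow> in_Q n C (\<lambda>i. x * v i + y * w i)"
proof -
  assume "in_Q n C v" "in_Q n C w"
  then obtain c c' where c: "\<forall>i\<in>{1..n}. v i = (\<Sum>j\<in>{1..n}. C i j * c j)"
    and c': "\<forall>i\<in>{1..n}. w i = (\<Sum>j\<in>{1..n}. C i j * c' j)" unfolding in_Q_def by blast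
  show ?thesis unfolding in_Q_def
  proof (intro exI[of _ "\<lambda>j. x * c j + y * c' j"] ballI)
    fix i assume i: "i \<in> {1..n}"
    show "x * v i + y * w i = (\<Sum>j\<in>{1..n}. C i j * (x * c j + y * c' j))"
      using c[rule_format, OF i] c'[rule_format, OF i]
      by (simp add: algebra_simps sum.distrib sum_distrib_left)
  qed
qed

lemma in_Q_zero: "in_Q n C (\<lambda>i. 0)"
  unfolding in_Q_def by (intro exI[of _ "\<lambda>j. 0"]) simp

lemma in_Q_sum: "finite P \<Longrightarrow> (\<And>p. p \<in> P \<Longrightarrow> in_Q n C (v p)) \<Longrightarrow> in_Q n C (\<lambda>i. \<Sum>p\<in>P. v p i)"
proof (induction P rule: finite_induct)
  case empty then show ?case by (simp add: in_Q_zero)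
next
  case (insert p P)
  have "in_Q n C (\<lambda>i. 1 * v p i + 1 * (\<Sum>p\<in>P. v p i))"
    by (rule in_Q_lin) (use insert in auto)
  then show ?case using insert by simp
qed

lemma ext_kernel:
  fixes C :: "nat \<Rightarrow> nat \<Rightarrow> int" and g :: "nat \<Rightarrow> int"
  assumes d: "d \<ge> 1" and m: "m \<ge> 1" and D: "detm d C \<noteq> 0" and De: "Delta C d \<noteq> 0"
    and Dm: "detm d C + int m * Delta C d \<noteq> 0"
    and h: "\<forall>i\<in>{1..d + m}. (\<Sum>j\<in>{1..d + m}. ext_path C d i j * g j) = 0"
  shows "\<forall>j\<in>{1..d + m}. g j = 0"
proof -
  have h': "\<forall>i\<in>{1..d + m}. (\<Sum>j\<in>{1..d + m}. ext_path C d i j * g j) = (if i = d + m then 0 else 0)"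
    using h by simp
  note E = ext_dvd[OF d m h']
  have b0: "g (d + 1) - g d = 0" using E(1) Dm by simp
  have cr: "g d * detm d C = g (d + 1) * detm (d - 1) C" by (rule X_cramer[OF d E(3)])
  have gd: "g d = 0" using cr b0 De by (simp add: Delta_def algebra_simps)
  have path: "\<forall>j\<le>m. g (d + j) = 0" using E(2) b0 gd by simp
  have "\<forall>i\<in>{1..d}. (\<Sum>j\<in>{1..d}. C i j * g j) = 0" using E(3) path[rule_format, of 1] m by simp
  then have X: "\<forall>j\<in>{1..d}. g j = 0" by (rule X_kernel[OF D])
  show ?thesis
  proof
    fix j assume j: "j \<in> {1..d + m}"
    show "g j = 0"
    proof (cases "j \<le> d")
      case True then show ?thesis using X j by simp
    next
      case False
      then have "j = d + (j - d)" "j - d \<le> m" using j by auto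
      then show ?thesis using path by metis
    qed
  qed
qed

lemma ext_det:
  fixes C :: "nat \<Rightarrow> nat \<Rightarrow> int"
  assumes d: "d \<ge> 1" and m: "m \<ge> 1" and D: "detm d C \<noteq> 0" and De: "Delta C d \<noteq> 0"
    and Dm: "detm d C + int m * Delta C d \<noteq> 0"
  shows "detm (d + m) (ext_path C d) \<noteq> 0"
  by (rule detm_nonzero_from_kernel) (rule ext_kernel[OF d m D De Dm])



definition xrowL :: "(nat \<Rightarrow> nat \<Rightarrow> int) \<Rightarrow> nat \<Rightarrow> (nat \<Rightarrow> int) \<Rightarrow> nat \<Rightarrow> int" where
  "xrowL C d B i = (if i \<le> d then (\<Sum>j\<in>{1..d}. C i j * B j) - (if i = d then B (d + 1) else 0)
                    else 2 * B i - B (i - 1) - B (i + 1))"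

lemma left_norm:
  fixes C :: "nat \<Rightarrow> nat \<Rightarrow> int" and a u B :: "nat \<Rightarrow> int"
  assumes d: "d \<ge> 1" and ext: "extensible C d" and aok: "a_seq_ok C d a" and l: "l \<ge> d"
    and u0: "\<forall>i>l. u i = 0" and Bs: "\<forall>j\<ge>l. B j = s"
    and LE: "\<forall>i\<in>{1..l}. u i = xrowL C d B i"
  shows "(\<Sum>i\<in>{1..l}. u i * a i) = Delta C d * s"
proof -
  define D where "D = detm d C"
  define De where "De = Delta C d"
  define \<sigma> where "\<sigma> = (\<Sum>i\<in>{1..l}. u i * a i)"
  define t where "t = De * s - \<sigma>"
  have D0: "D \<noteq> 0" and De0: "De \<noteq> 0" and gcd1: "gcd D De = 1"
    using ext unfolding extensible_def D_def De_def by auto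
  define m where "m = l + nat \<bar>t\<bar> + nat \<bar>D\<bar> + 1"
  have m1: "m \<ge> 1" and ml: "d + m > l" unfolding m_def by auto
  have big: "\<bar>D + int m * De\<bar> > \<bar>t\<bar>"
  proof -
    have a1: "\<bar>De\<bar> \<ge> 1" using De0 by linarith
    have "int m * 1 \<le> int m * \<bar>De\<bar>" by (rule mult_left_mono[OF a1]) simp
    then have "\<bar>int m * De\<bar> \<ge> int m" by (simp add: abs_mult)
    then show ?thesis unfolding m_def by linarith
  qed
  then have Dm: "D + int m * De \<noteq> 0" by auto
  define n where "n = d + m"
  have detn: "detm n (ext_path C d) \<noteq> 0"
    unfolding n_def by (rule ext_det[OF d m1]) (use D0 De0 Dm in \<open>auto simp: D_def De_def\<close>)
  have Qa: "in_Q n (ext_path C d) (\<lambda>i. u i + (if i = n then s else 0))"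
    unfolding in_Q_def
  proof (intro exI[of _ B] ballI)
    fix i assume i: "i \<in> {1..n}"
    have xr: "(\<Sum>j\<in>{1..n}. ext_path C d i j * B j) =
      (if i \<le> d then (\<Sum>j\<in>{1..d}. C i j * B j) - (if i = d then B (d + 1) else 0)
       else 2 * B i - B (i - 1) - (if i = n then 0 else B (i + 1)))"
      using Xrow[OF d m1, of i C B] i unfolding n_def by simp
    show "u i + (if i = n then s else 0) = (\<Sum>j\<in>{1..n}. ext_path C d i j * B j)"
    proof (cases "i = n")
      case True
      have "\<not> i \<le> d" using True m1 unfolding n_def by simp
      moreover have "B i = s" "B (i - 1) = s" using True ml Bs unfolding n_def by auto
      moreover have "u i = 0" using True ml u0 unfolding n_def by auto
      ultimately show ?thesis using xr True by simp
    next
      case False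
      show ?thesis
      proof (cases "i \<le> l")
        case True
        then have "u i = xrowL C d B i" using LE i by auto
        then show ?thesis using xr False by (simp add: xrowL_def)
      next
        case gl: False
        then have "\<not> i \<le> d" "u i = 0" "B i = s" "B (i - 1) = s" "B (i + 1) = s"
          using l u0 Bs by auto
        then show ?thesis using xr False by simp
      qed
    qed
  qed
  have Qb: "in_Q n (ext_path C d) (\<lambda>i. - De * (if i = p then 1 else 0) - a p * (if i = n then 1 else 0))"
    if "p \<in> {1..n}" for p
    using aok detn that unfolding a_seq_ok_def n_def De_def by blast
  have Qc: "in_Q n (ext_path C d) (\<lambda>i. \<Sum>p\<in>{1..n}. u p * (- De * (if i = p then 1 else 0) - a p * (if i = n then 1 else 0)))"
  proof (rule in_Q_sum)
    fix p assume p: "p \<in> {1..n}"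
    have "in_Q n (ext_path C d) (\<lambda>i. u p * (- De * (if i = p then 1 else 0) - a p * (if i = n then 1 else 0)) + 0 * 0)"
      by (rule in_Q_lin[OF Qb[OF p] in_Q_zero])
    then show "in_Q n (ext_path C d) (\<lambda>i. u p * (- De * (if i = p then 1 else 0) - a p * (if i = n then 1 else 0)))"
      by simp
  qed simp
  have sig: "(\<Sum>p\<in>{1..n}. u p * a p) = \<sigma>"
  proof -
    have "(\<Sum>p\<in>{1..n}. u p * a p) = (\<Sum>p\<in>{1..n}. if p \<le> l then u p * a p else 0)"
      by (rule sum.cong) (use u0 in auto)
    also have "\<dots> = \<sigma>" unfolding \<sigma>_def by (rule sum_if_le) (use ml in \<open>simp add: n_def\<close>)
    finally show ?thesis .
  qed
  have Qd: "in_Q n (ext_path C d) (\<lambda>i. De * (u i + (if i = n then s else 0)) +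
      1 * (\<Sum>p\<in>{1..n}. u p * (- De * (if i = p then 1 else 0) - a p * (if i = n then 1 else 0))))"
    by (rule in_Q_lin[OF Qa Qc])
  have Qt: "in_Q n (ext_path C d) (\<lambda>i. if i = n then t else 0)"
  proof (rule in_Q_cong[OF Qd])
    fix i assume i: "i \<in> {1..n}"
    have "(\<Sum>p\<in>{1..n}. u p * (- De * (if i = p then 1 else 0) - a p * (if i = n then 1 else 0)))
        = (\<Sum>p\<in>{1..n}. (if p = i then - De * u p else 0)) - (if i = n then (\<Sum>p\<in>{1..n}. u p * a p) else 0)"
    proof -
      have "(\<Sum>p\<in>{1..n}. u p * (- De * (if i = p then 1 else 0) - a p * (if i = n then 1 else 0)))
          = (\<Sum>p\<in>{1..n}. (if p = i then - De * u p else 0) - (if i = n then u p * a p else 0))"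
        by (rule sum.cong) (auto simp: algebra_simps)
      also have "\<dots> = (\<Sum>p\<in>{1..n}. (if p = i then - De * u p else 0)) - (\<Sum>p\<in>{1..n}. (if i = n then u p * a p else 0))"
        by (rule sum_subtractf)
      also have "(\<Sum>p\<in>{1..n}. (if i = n then u p * a p else 0)) = (if i = n then (\<Sum>p\<in>{1..n}. u p * a p) else 0)"
        by (cases "i = n") simp_all
      finally show ?thesis .
    qed
    also have "\<dots> = - De * u i - (if i = n then \<sigma> else 0)" using i sig by simp
    finally have S: "(\<Sum>p\<in>{1..n}. u p * (- De * (if i = p then 1 else 0) - a p * (if i = n then 1 else 0))) = - De * u i - (if i = n then \<sigma> else 0)" .
    show "De * (u i + (if i = n then s else 0)) +
      1 * (\<Sum>p\<in>{1..n}. u p * (- De * (if i = p then 1 else 0) - a p * (if i = n then 1 else 0)))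
      = (if i = n then t else 0)" unfolding S t_def by (cases "i = n") (simp_all add: algebra_simps)
  qed
  then obtain g where g: "\<forall>i\<in>{1..n}. (if i = n then t else 0) = (\<Sum>j\<in>{1..n}. ext_path C d i j * g j)"
    unfolding in_Q_def by blast
  have "t * De = (g (d + 1) - g d) * (D + int m * De)"
    using ext_dvd(1)[OF d m1, of C g t] g unfolding n_def D_def De_def by simp
  then have dv: "(D + int m * De) dvd t * De" by simp
  have "coprime (D + int m * De) De"
  proof -
    have "gcd De (int m * De + D) = gcd De D" by (rule gcd_add_mult)
    then have "gcd (D + int m * De) De = 1" using gcd1 by (simp add: gcd.commute add.commute)
    then show ?thesis by (simp add: coprime_iff_gcd_eq_1)
  qed
  then have "(D + int m * De) dvd t" using dv by (simp add: coprime_dvd_mult_left_iff)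
  then have "t = 0"
  proof -
    assume dv: "(D + int m * De) dvd t"
    show "t = 0"
    proof (rule ccontr)
      assume "t \<noteq> 0"
      then have "\<bar>D + int m * De\<bar> \<le> \<bar>t\<bar>" using dv by (rule dvd_imp_le_int)
      then show False using big by simp
    qed
  qed
  then show ?thesis unfolding t_def \<sigma>_def De_def by simp
qed



lemma Z_kernel:
  fixes C1 C2 :: "nat \<Rightarrow> nat \<Rightarrow> int" and g :: "nat \<Rightarrow> int"
  assumes d1: "d1 \<ge> 1" and d2: "d2 \<ge> 1" and e1: "extensible C1 d1" and e2: "extensible C2 d2"
    and k: "int k > \<bar>detm (d1 - 1) C1 * Delta C2 d2 + detm d2 C2 * Delta C1 d1\<bar>"
    and h: "\<forall>i\<in>{1..d1 + d2 + k}. (\<Sum>j\<in>{1..d1 + d2 + k}. Zmat C1 d1 C2 d2 k i j * g j) = 0"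
  shows "\<forall>j\<in>{1..d1 + d2 + k}. g j = 0"
proof -
  let ?n = "d1 + d2 + k"
  define h2 where "h2 = (\<lambda>j. g (?n + 1 - j))"
  have k1: "k \<ge> 1" using k by linarith
  have row: "zrow C1 d1 C2 d2 k g i = 0" if "i \<in> {1..?n}" for i
  proof -
    have "(\<Sum>j\<in>{1..?n}. Zmat C1 d1 C2 d2 k i j * g j) = zrow C1 d1 C2 d2 k g i" by (rule Zrow[OF d1 d2 that])
    then show ?thesis using h that by simp
  qed
  have X1: "\<forall>i\<in>{1..d1}. (\<Sum>j\<in>{1..d1}. C1 i j * g j) = (if i = d1 then g (d1 + 1) else 0)"
  proof
    fix i assume i: "i \<in> {1..d1}"
    then show "(\<Sum>j\<in>{1..d1}. C1 i j * g j) = (if i = d1 then g (d1 + 1) else 0)"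
      using row[of i] by (auto simp: zrow_def split: if_splits)
  qed
  have X2: "\<forall>i\<in>{1..d2}. (\<Sum>j\<in>{1..d2}. C2 i j * h2 j) = (if i = d2 then h2 (d2 + 1) else 0)"
  proof
    fix i assume i: "i \<in> {1..d2}"
    have ii: "?n + 1 - i \<in> {1..?n}" "\<not> ?n + 1 - i \<le> d1" "\<not> ?n + 1 - i \<le> d1 + k"
      "?n + 1 - (?n + 1 - i) = i" "(?n + 1 - i = d1 + k + 1) = (i = d2)" using i k1 by auto
    have "?n + 1 - (d2 + 1) = d1 + k" by simp
    then show "(\<Sum>j\<in>{1..d2}. C2 i j * h2 j) = (if i = d2 then h2 (d2 + 1) else 0)"
      using row[OF ii(1)] ii unfolding zrow_def h2_def by (auto split: if_splits)
  qed
  have cr1: "g d1 * detm d1 C1 = g (d1 + 1) * detm (d1 - 1) C1" by (rule X_cramer[OF d1 X1])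
  have cr2: "h2 d2 * detm d2 C2 = h2 (d2 + 1) * detm (d2 - 1) C2" by (rule X_cramer[OF d2 X2])
  have lin: "\<And>i. d1 < i \<Longrightarrow> i < d1 + k + 1 \<Longrightarrow> 2 * g i - g (i - 1) - g (i + 1) = 0"
  proof -
    fix i assume "d1 < i" "i < d1 + k + 1"
    then have "i \<in> {1..?n}" "\<not> i \<le> d1" "i \<le> d1 + k" using d2 by auto
    then show "2 * g i - g (i - 1) - g (i + 1) = 0" using row[of i] by (simp add: zrow_def)
  qed
  have L: "g (d1 + j) = g d1 + int j * (g (d1 + 1) - g d1)" if "j \<le> k + 1" for j
    using linear_path[where a = d1 and b = "d1 + k + 1" and j = j and g = g, OF lin] that by simp
  define \<beta> where "\<beta> = g (d1 + 1) - g d1"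
  define D1 where "D1 = detm d1 C1"
  define D1' where "D1' = detm (d1 - 1) C1"
  define D2 where "D2 = detm d2 C2"
  define D2' where "D2' = detm (d2 - 1) C2"
  have De1: "Delta C1 d1 = D1 - D1'" and De2: "Delta C2 d2 = D2 - D2'"
    unfolding Delta_def D1_def D1'_def D2_def D2'_def by auto
  have nz1: "D1 - D1' \<noteq> 0" "D1 \<noteq> 0" and nz2: "D2 - D2' \<noteq> 0" "D2 \<noteq> 0"
    using e1 e2 unfolding extensible_def Delta_def D1_def D1'_def D2_def D2'_def by auto
  have h2a: "h2 d2 = g d1 + int (k + 1) * \<beta>" unfolding h2_def \<beta>_def
    using L[of "k + 1"] by (simp add: add.commute add.left_commute)
  have h2b: "h2 (d2 + 1) = g d1 + int k * \<beta>" unfolding h2_def \<beta>_def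
    using L[of k] by (simp add: add.commute add.left_commute)
  have eq1: "g d1 * (D1 - D1') = \<beta> * D1'" using cr1 unfolding \<beta>_def D1_def D1'_def by (simp add: algebra_simps)
  have eq2: "(g d1 + int k * \<beta>) * (D2 - D2') + \<beta> * D2 = 0"
    using cr2 unfolding h2a h2b D2_def D2'_def by (simp add: algebra_simps)
  have key: "\<beta> * (D1' * (D2 - D2') + D2 * (D1 - D1') + int k * ((D1 - D1') * (D2 - D2'))) = 0"
  proof -
    have "(D1 - D1') * ((g d1 + int k * \<beta>) * (D2 - D2') + \<beta> * D2) = 0" using eq2 by simp
    then have "(g d1 * (D1 - D1')) * (D2 - D2') + \<beta> * (int k * ((D1 - D1') * (D2 - D2')) + D2 * (D1 - D1')) = 0"
      by (simp add: algebra_simps)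
    then show ?thesis unfolding eq1 by (simp add: algebra_simps)
  qed
  have fac: "D1' * (D2 - D2') + D2 * (D1 - D1') + int k * ((D1 - D1') * (D2 - D2')) \<noteq> 0"
  proof
    assume a: "D1' * (D2 - D2') + D2 * (D1 - D1') + int k * ((D1 - D1') * (D2 - D2')) = 0"
    have "(D1 - D1') * (D2 - D2') \<noteq> 0" using nz1 nz2 by simp
    then have p1: "\<bar>(D1 - D1') * (D2 - D2')\<bar> \<ge> 1" by linarith
    have "int k * 1 \<le> int k * \<bar>(D1 - D1') * (D2 - D2')\<bar>" by (rule mult_left_mono[OF p1]) simp
    then have "\<bar>int k * ((D1 - D1') * (D2 - D2'))\<bar> \<ge> int k" by (simp add: abs_mult)
    moreover have "\<bar>D1' * (D2 - D2') + D2 * (D1 - D1')\<bar> < int k"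
      using k unfolding De1 De2 D1'_def D2_def by simp
    ultimately show False using a by linarith
  qed
  have b0: "\<beta> = 0" using key fac by simp
  have g1: "g d1 = 0" using eq1 b0 nz1 by simp
  have path: "g (d1 + j) = 0" if "j \<le> k + 1" for j using L[OF that] b0 g1 unfolding \<beta>_def by simp
  have "\<forall>i\<in>{1..d1}. (\<Sum>j\<in>{1..d1}. C1 i j * g j) = 0" using X1 path[of 1] by simp
  then have z1: "\<forall>j\<in>{1..d1}. g j = 0" by (rule X_kernel[OF nz1(2)[unfolded D1_def]])
  have "h2 (d2 + 1) = 0" using h2b b0 g1 by simp
  then have "\<forall>i\<in>{1..d2}. (\<Sum>j\<in>{1..d2}. C2 i j * h2 j) = 0" using X2 by simp
  then have z2: "\<forall>j\<in>{1..d2}. h2 j = 0" by (rule X_kernel[OF nz2(2)[unfolded D2_def]])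
  show ?thesis
  proof
    fix j assume j: "j \<in> {1..?n}"
    consider "j \<le> d1" | "d1 < j" "j \<le> d1 + k + 1" | "d1 + k + 1 < j" by linarith
    then show "g j = 0"
    proof cases
      case 1 then show ?thesis using z1 j by simp
    next
      case 2
      then have "j - d1 \<le> k + 1" by auto
      then have "g (d1 + (j - d1)) = 0" by (rule path)
      then show ?thesis using 2 by simp
    next
      case 3
      then have "?n + 1 - j \<in> {1..d2}" "?n + 1 - (?n + 1 - j) = j" using j by auto
      then show ?thesis using z2 unfolding h2_def by force
    qed
  qed
qed



definition svec :: "nat \<Rightarrow> nat \<Rightarrow> nat \<Rightarrow> nat \<Rightarrow> nat \<Rightarrow> (nat \<Rightarrow> int) \<Rightarrow> (nat \<Rightarrow> int) \<Rightarrow> int \<Rightarrow> nat \<Rightarrow> int" where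
  "svec d1 d2 k l r b c s j = (if j \<le> l - 1 then b j
      else if d1 + d2 + k + 1 - j \<le> r - 1 then c (d1 + d2 + k + 1 - j) else s)"

definition bvec :: "nat \<Rightarrow> (nat \<Rightarrow> int) \<Rightarrow> int \<Rightarrow> nat \<Rightarrow> int" where
  "bvec l b s j = (if j \<le> l - 1 then b j else s)"

locale eqsetup =
  fixes d1 d2 k l r :: nat
  assumes d1: "d1 \<ge> 1" and d2: "d2 \<ge> 1" and l: "l \<ge> d1" and r: "r \<ge> d2"
    and n: "l + r \<le> d1 + d2 + k"
begin

abbreviation "nn \<equiv> d1 + d2 + k"

lemma S_left: "j \<le> l + 1 \<Longrightarrow> svec d1 d2 k l r b c s j = bvec l b s j"
  using n r d2 unfolding svec_def bvec_def by auto

lemma S_mid: "l \<le> j \<Longrightarrow> j \<le> nn + 1 - r \<Longrightarrow> svec d1 d2 k l r b c s j = s"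
  using n r d2 l d1 unfolding svec_def by auto

lemma S_right: "j \<le> r + 1 \<Longrightarrow> svec d1 d2 k l r b c s (nn + 1 - j) = bvec r c s j"
  using n l d1 d2 r unfolding svec_def bvec_def by auto

lemma Pa: "i \<in> {1..l} \<Longrightarrow> zrow C1 d1 C2 d2 k (svec d1 d2 k l r b c s) i = xrowL C1 d1 (bvec l b s) i"
proof -
  assume i: "i \<in> {1..l}"
  show ?thesis
  proof (cases "i \<le> d1")
    case True
    have "(\<Sum>j\<in>{1..d1}. C1 i j * svec d1 d2 k l r b c s j) = (\<Sum>j\<in>{1..d1}. C1 i j * bvec l b s j)"
      by (rule sum.cong) (use l in \<open>auto simp: S_left\<close>)
    moreover have "svec d1 d2 k l r b c s (d1 + 1) = bvec l b s (d1 + 1)" using l by (simp add: S_left)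
    ultimately show ?thesis using True by (simp add: zrow_def xrowL_def)
  next
    case False
    have "i \<le> d1 + k" using i n r by auto
    moreover have "svec d1 d2 k l r b c s i = bvec l b s i" "svec d1 d2 k l r b c s (i - 1) = bvec l b s (i - 1)"
      "svec d1 d2 k l r b c s (i + 1) = bvec l b s (i + 1)" using i by (auto simp: S_left)
    ultimately show ?thesis using False by (simp add: zrow_def xrowL_def)
  qed
qed

lemma Pb: "i \<in> {1..r} \<Longrightarrow> zrow C1 d1 C2 d2 k (svec d1 d2 k l r b c s) (nn + 1 - i) = xrowL C2 d2 (bvec r c s) i"
proof -
  assume i: "i \<in> {1..r}"
  show ?thesis
  proof (cases "i \<le> d2")
    case True
    have a: "\<not> nn + 1 - i \<le> d1" "\<not> nn + 1 - i \<le> d1 + k" "nn + 1 - (nn + 1 - i) = i"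
      "(nn + 1 - i = d1 + k + 1) = (i = d2)" using True i d1 by auto
    have "(\<Sum>j\<in>{1..d2}. C2 i j * svec d1 d2 k l r b c s (nn + 1 - j)) = (\<Sum>j\<in>{1..d2}. C2 i j * bvec r c s j)"
    proof (rule sum.cong)
      fix x assume "x \<in> {1..d2}"
      then have "x \<le> r + 1" using r by simp
      then have "svec d1 d2 k l r b c s (nn + 1 - x) = bvec r c s x" by (rule S_right)
      then show "C2 i x * svec d1 d2 k l r b c s (nn + 1 - x) = C2 i x * bvec r c s x" by simp
    qed simp
    moreover have "svec d1 d2 k l r b c s (d1 + k) = bvec r c s (d2 + 1)"
      using S_right[of "d2 + 1" b c s] r by simp
    ultimately show ?thesis using True a by (simp add: zrow_def xrowL_def)
  next
    case False
    have a: "\<not> nn + 1 - i \<le> d1" "nn + 1 - i \<le> d1 + k" using False i n l by auto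
    have b: "nn + 1 - i - 1 = nn + 1 - (i + 1)" "nn + 1 - i + 1 = nn + 1 - (i - 1)" using i n False by auto
    have i1: "i \<le> r + 1" "i + 1 \<le> r + 1" "i - 1 \<le> r + 1" using i by auto
    have "svec d1 d2 k l r b c s (nn + 1 - i) = bvec r c s i"
      "svec d1 d2 k l r b c s (nn + 1 - (i + 1)) = bvec r c s (i + 1)"
      "svec d1 d2 k l r b c s (nn + 1 - (i - 1)) = bvec r c s (i - 1)"
      by (rule S_right[OF i1(1)], rule S_right[OF i1(2)], rule S_right[OF i1(3)])
    moreover have "Suc (Suc nn) - i = Suc (Suc nn - i)" using i n l d1 by auto
    ultimately show ?thesis using False a unfolding b by (simp add: zrow_def xrowL_def)
  qed
qed

lemma Pc: "l < i \<Longrightarrow> i < nn + 1 - r \<Longrightarrow> zrow C1 d1 C2 d2 k (svec d1 d2 k l r b c s) i = 0"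
proof -
  assume a: "l < i" "i < nn + 1 - r"
  then have "\<not> i \<le> d1" "i \<le> d1 + k" using l r n d1 d2 by auto
  moreover have "svec d1 d2 k l r b c s i = s" "svec d1 d2 k l r b c s (i - 1) = s"
    "svec d1 d2 k l r b c s (i + 1) = s" using a by (auto intro!: S_mid)
  ultimately show ?thesis by (simp add: zrow_def)
qed

lemma EQ:
  assumes s1: "\<forall>i>l. fst lam i = 0" and s2: "\<forall>i>l. fst gam i = 0"
    and s3: "\<forall>j>r. snd lam j = 0" and s4: "\<forall>j>r. snd gam j = 0"
  shows "(\<forall>i\<in>{1..nn}. lift d1 d2 k lam i - lift d1 d2 k gam i =
            (\<Sum>j\<in>{1..nn}. Zmat C1 d1 C2 d2 k i j * svec d1 d2 k l r b c s j)) \<longleftrightarrow>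
         ((\<forall>i\<in>{1..l}. fst lam i - fst gam i = xrowL C1 d1 (bvec l b s) i) \<and>
          (\<forall>i\<in>{1..r}. snd lam i - snd gam i = xrowL C2 d2 (bvec r c s) i))"
proof -
  have Z: "(\<Sum>j\<in>{1..nn}. Zmat C1 d1 C2 d2 k i j * svec d1 d2 k l r b c s j) = zrow C1 d1 C2 d2 k (svec d1 d2 k l r b c s) i"
    if "i \<in> {1..nn}" for i by (rule Zrow[OF d1 d2 that])
  have La: "lift d1 d2 k lam i - lift d1 d2 k gam i = fst lam i - fst gam i" if "i \<in> {1..l}" for i
  proof -
    have "i \<in> {1..nn}" "nn + 1 - i > r" using that n r d2 by auto
    then show ?thesis using s3 s4 by (simp add: lift_def)
  qed
  have Lb: "lift d1 d2 k lam (nn + 1 - i) - lift d1 d2 k gam (nn + 1 - i) = snd lam i - snd gam i" if "i \<in> {1..r}" for i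
  proof -
    have "nn + 1 - i \<in> {1..nn}" "nn + 1 - i > l" "nn + 1 - (nn + 1 - i) = i" using that n l d1 by auto
    then show ?thesis using s1 s2 by (simp add: lift_def)
  qed
  have Lc: "lift d1 d2 k lam i - lift d1 d2 k gam i = 0" if "l < i" "i < nn + 1 - r" for i
  proof -
    have "i \<in> {1..nn}" "nn + 1 - i > r" using that n r d2 by auto
    then show ?thesis using s1 s2 s3 s4 that by (simp add: lift_def)
  qed
  show ?thesis
  proof
    assume A: "\<forall>i\<in>{1..nn}. lift d1 d2 k lam i - lift d1 d2 k gam i =
            (\<Sum>j\<in>{1..nn}. Zmat C1 d1 C2 d2 k i j * svec d1 d2 k l r b c s j)"
    have "\<forall>i\<in>{1..l}. fst lam i - fst gam i = xrowL C1 d1 (bvec l b s) i"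
    proof
      fix i assume i: "i \<in> {1..l}"
      then have i': "i \<in> {1..nn}" using n r by auto
      show "fst lam i - fst gam i = xrowL C1 d1 (bvec l b s) i"
        using A[rule_format, OF i'] La[OF i] Z[OF i'] Pa[OF i, of C1 C2 b c s] by simp
    qed
    moreover have "\<forall>i\<in>{1..r}. snd lam i - snd gam i = xrowL C2 d2 (bvec r c s) i"
    proof
      fix i assume i: "i \<in> {1..r}"
      then have i': "nn + 1 - i \<in> {1..nn}" using n l d1 by auto
      show "snd lam i - snd gam i = xrowL C2 d2 (bvec r c s) i"
        using A[rule_format, OF i'] Lb[OF i] Z[OF i'] Pb[OF i, of C1 C2 b c s] by simp
    qed
    ultimately show "(\<forall>i\<in>{1..l}. fst lam i - fst gam i = xrowL C1 d1 (bvec l b s) i) \<and>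
          (\<forall>i\<in>{1..r}. snd lam i - snd gam i = xrowL C2 d2 (bvec r c s) i)" ..
  next
    assume B: "(\<forall>i\<in>{1..l}. fst lam i - fst gam i = xrowL C1 d1 (bvec l b s) i) \<and>
          (\<forall>i\<in>{1..r}. snd lam i - snd gam i = xrowL C2 d2 (bvec r c s) i)"
    show "\<forall>i\<in>{1..nn}. lift d1 d2 k lam i - lift d1 d2 k gam i =
            (\<Sum>j\<in>{1..nn}. Zmat C1 d1 C2 d2 k i j * svec d1 d2 k l r b c s j)"
    proof
      fix i assume i: "i \<in> {1..nn}"
      consider "i \<le> l" | "l < i" "i < nn + 1 - r" | "nn + 1 - r \<le> i" by linarith
      then show "lift d1 d2 k lam i - lift d1 d2 k gam i =
            (\<Sum>j\<in>{1..nn}. Zmat C1 d1 C2 d2 k i j * svec d1 d2 k l r b c s j)"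
      proof cases
        case 1
        then have i1: "i \<in> {1..l}" using i by auto
        show ?thesis using B La[OF i1] Z[OF i] Pa[OF i1, of C1 C2 b c s] i1 by simp
      next
        case 2
        show ?thesis using Lc[OF 2] Z[OF i] Pc[OF 2, of C1 C2 b c s] by simp
      next
        case 3
        define i' where "i' = nn + 1 - i"
        have i1: "i' \<in> {1..r}" "i = nn + 1 - i'" using i 3 unfolding i'_def by auto
        show ?thesis using B Lb[OF i1(1)] Z[OF i] Pb[OF i1(1), of C1 C2 b c s] i1 by simp
      qed
    qed
  qed
qed

end



lemma ell_zero: "finite {i. x i \<noteq> 0} \<Longrightarrow> ell x < i \<Longrightarrow> x i = 0"
proof (rule ccontr)
  assume f: "finite {i. x i \<noteq> 0}" and li: "ell x < i" and ne: "x i \<noteq> 0"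
  have "i \<le> Max (insert 0 {i. x i \<noteq> 0})" by (rule Max_ge) (use f ne in auto)
  then show False using li unfolding ell_def by simp
qed

lemma ell_le: "(\<forall>i>L. x i = 0) \<Longrightarrow> ell x \<le> L"
  unfolding ell_def
proof -
  assume a: "\<forall>i>L. x i = 0"
  have f: "finite (insert 0 {i. x i \<noteq> 0})"
    by (rule finite_subset[of _ "{0..L}"]) (use a in \<open>auto simp: not_less[symmetric]\<close>)
  show "Max (insert 0 {i. x i \<noteq> 0}) \<le> L"
    by (subst Max_le_iff) (use f a in \<open>auto simp: not_less[symmetric]\<close>)
qed

lemma H1_fin: "x \<in> H1plus \<Longrightarrow> finite {i. x i \<noteq> 0}" unfolding H1plus_def by simp

lemma H2_fst: "g \<in> H2plus \<Longrightarrow> ls d1 g < i \<Longrightarrow> fst g i = 0"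
  unfolding H2plus_def ls_def by (cases g) (auto intro: ell_zero simp: H1plus_def)

lemma H2_snd: "g \<in> H2plus \<Longrightarrow> rs d2 g < i \<Longrightarrow> snd g i = 0"
  unfolding H2plus_def rs_def by (cases g) (auto intro: ell_zero simp: H1plus_def)

lemma sum_ell:
  assumes "finite {i. x i \<noteq> 0}" "ell x \<le> L"
  shows "(\<Sum>i\<in>{1..ell x}. x i * a i) = (\<Sum>i\<in>{1..L}. x i * a i)"
  by (rule sum.mono_neutral_left) (use assms ell_zero[OF assms(1)] in auto)

lemma linear_const:
  fixes E :: "nat \<Rightarrow> int"
  assumes h: "\<And>i. a < i \<Longrightarrow> i < b \<Longrightarrow> 2 * E i - E (i - 1) - E (i + 1) = 0"
    and q: "a \<le> q" "q + 1 \<le> b" "E q = E (q + 1)"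
  shows "\<And>p. a \<le> p \<Longrightarrow> p \<le> b \<Longrightarrow> E p = E a"
proof -
  fix p assume p: "a \<le> p" "p \<le> b"
  have L: "\<And>j. a + j \<le> b \<Longrightarrow> E (a + j) = E a + int j * (E (a + 1) - E a)"
    using linear_path[where a = a and b = b and g = E, OF h] by blast
  have "E (a + (q - a)) = E a + int (q - a) * (E (a + 1) - E a)" using q by (intro L) auto
  moreover have "E (a + (q - a + 1)) = E a + int (q - a + 1) * (E (a + 1) - E a)" using q by (intro L) auto
  ultimately have "E (a + 1) - E a = 0" using q by (simp add: algebra_simps)
  then show "E p = E a" using L[of "p - a"] p by simp
qed

lemma delta_mono:
  fixes e :: "nat \<Rightarrow> int"
  assumes h: "\<And>p. a < p \<Longrightarrow> p < b \<Longrightarrow> e (p - 1) + e (p + 1) - 2 * e p \<ge> 0"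
  shows "a \<le> q \<Longrightarrow> q + j < b \<Longrightarrow> e (q + 1) - e q \<le> e (q + j + 1) - e (q + j)"
proof (induction j)
  case 0 then show ?case by simp
next
  case (Suc j)
  have "e (q + Suc j - 1) + e (q + Suc j + 1) - 2 * e (q + Suc j) \<ge> 0"
    by (rule h) (use Suc.prems in auto)
  then show ?case using Suc by simp
qed

lemma convex_flat:
  fixes e :: "nat \<Rightarrow> int" and S :: nat
  assumes h: "\<And>p. a < p \<Longrightarrow> p < b \<Longrightarrow> e (p - 1) + e (p + 1) - 2 * e p \<ge> 0"
    and bd: "\<And>p. a \<le> p \<Longrightarrow> p \<le> b \<Longrightarrow> 0 \<le> e p \<and> e p \<le> int S"
    and p: "a + S \<le> p" "p + 1 + S \<le> b"
  shows "e (p + 1) = e p"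
proof (rule ccontr)
  assume ne: "e (p + 1) \<noteq> e p"
  show False
  proof (cases "e (p + 1) < e p")
    case True
    have dn: "e (q + 1) - e q \<le> -1" if "a \<le> q" "q \<le> p" for q
      using delta_mono[where a = a and b = b and e = e and q = q and j = "p - q", OF h] that p True by simp
    have "e (a + j) \<le> e a - int j" if "j \<le> p + 1 - a" for j
      using that
    proof (induction j)
      case 0 then show ?case by simp
    next
      case (Suc j)
      then have "e (a + j + 1) - e (a + j) \<le> -1" by (intro dn) auto
      then show ?case using Suc by simp
    qed
    from this[of "p + 1 - a"] have "e (p + 1) \<le> e a - int (p + 1 - a)" using p by simp
    moreover have "e a \<le> int S" "0 \<le> e (p + 1)" using bd[of a] bd[of "p + 1"] p by auto
    ultimately show False using p by simp
  next
    case False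
    then have up: "e (p + 1) > e p" using ne by simp
    have upq: "e (q + 1) - e q \<ge> 1" if "p \<le> q" "q < b" for q
      using delta_mono[where a = a and b = b and e = e and q = p and j = "q - p", OF h] that p up by simp
    have "e (p + j) \<ge> e p + int j" if "j \<le> b - p" for j
      using that
    proof (induction j)
      case 0 then show ?case by simp
    next
      case (Suc j)
      then have "e (p + j + 1) - e (p + j) \<ge> 1" by (intro upq) auto
      then show ?case using Suc by simp
    qed
    from this[of "b - p"] have "e b \<ge> e p + int (b - p)" using p by simp
    moreover have "e b \<le> int S" "0 \<le> e p" using bd[of b] bd[of p] p by auto
    ultimately show False using p by simp
  qed
qed



locale ctx =
  fixes C1 C2 :: "nat \<Rightarrow> nat \<Rightarrow> int" and d1 d2 :: nat and a1 a2 :: "nat \<Rightarrow> int"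
  assumes d1: "d1 \<ge> 1" and d2: "d2 \<ge> 1" and ep: "extensible_pair C1 d1 C2 d2"
    and aok1: "a_seq_ok C1 d1 a1" and aok2: "a_seq_ok C2 d2 a2"
begin

lemma e1: "extensible C1 d1" and e2: "extensible C2 d2"
  using ep unfolding extensible_pair_def by auto

lemma succeq_unfold:
  "succeq C1 d1 C2 d2 a1 a2 lam1 lam2 \<longleftrightarrow>
     lam1 \<in> H2plus \<and> lam2 \<in> H2plus \<and>
     gnorm C1 d1 C2 d2 a1 a2 lam1 = gnorm C1 d1 C2 d2 a1 a2 lam2 \<and>
     (\<exists>b c s. (\<forall>i\<in>{1..max (ls d1 lam1) (ls d1 lam2) - 1}. b i \<ge> 0) \<and>
        (\<forall>j\<in>{1..max (rs d2 lam1) (rs d2 lam2) - 1}. c j \<ge> 0) \<and> s \<ge> 0 \<and>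
        (\<forall>k. max (ls d1 lam1) (ls d1 lam2) + max (rs d2 lam1) (rs d2 lam2) - d1 - d2 \<le> k \<longrightarrow>
          (\<forall>i\<in>{1..d1 + d2 + k}. lift d1 d2 k lam1 i - lift d1 d2 k lam2 i =
              (\<Sum>j\<in>{1..d1 + d2 + k}. Zmat C1 d1 C2 d2 k i j *
                 svec d1 d2 k (max (ls d1 lam1) (ls d1 lam2)) (max (rs d2 lam1) (rs d2 lam2)) b c s j))))"
  unfolding succeq_def svec_def Let_def by simp

lemma G:
  fixes \<rho> \<sigma> :: "(nat \<Rightarrow> int) \<times> (nat \<Rightarrow> int)" and E :: "nat \<Rightarrow> int"
  assumes rho: "\<rho> \<in> H2plus" and sig: "\<sigma> \<in> H2plus"
    and lD: "l = max (ls d1 \<rho>) (ls d1 \<sigma>)" and rD: "r = max (rs d2 \<rho>) (rs d2 \<sigma>)"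
    and kk: "l + r \<le> d1 + d2 + k"
    and Epos: "\<forall>j\<in>{1..d1 + d2 + k}. E j \<ge> 0"
    and eq: "\<forall>i\<in>{1..d1 + d2 + k}. lift d1 d2 k \<rho> i - lift d1 d2 k \<sigma> i =
               (\<Sum>j\<in>{1..d1 + d2 + k}. Zmat C1 d1 C2 d2 k i j * E j)"
    and q: "l \<le> q" "q + 1 \<le> d1 + d2 + k + 1 - r" "E q = E (q + 1)"
  shows "succeq C1 d1 C2 d2 a1 a2 \<rho> \<sigma>"
proof -
  let ?n = "d1 + d2 + k"
  have ld: "l \<ge> d1" and rd: "r \<ge> d2" unfolding lD rD ls_def rs_def by auto
  have lsb: "ls d1 \<rho> \<le> l" "ls d1 \<sigma> \<le> l" "rs d2 \<rho> \<le> r" "rs d2 \<sigma> \<le> r" using lD rD by auto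
  interpret eqsetup d1 d2 k l r by unfold_locales (use d1 d2 ld rd kk in auto)
  have s1: "\<forall>i>l. fst \<rho> i = 0" "\<forall>i>l. fst \<sigma> i = 0"
    using H2_fst[OF rho, of d1] H2_fst[OF sig, of d1] lsb by auto
  have s2: "\<forall>i>r. snd \<rho> i = 0" "\<forall>i>r. snd \<sigma> i = 0"
    using H2_snd[OF rho, of d2] H2_snd[OF sig, of d2] lsb by auto
  have Z: "(\<Sum>j\<in>{1..?n}. Zmat C1 d1 C2 d2 k i j * E j) = zrow C1 d1 C2 d2 k E i"
    if "i \<in> {1..?n}" for i by (rule Zrow[OF d1 d2 that])
  have lin: "2 * E i - E (i - 1) - E (i + 1) = 0" if "l < i" "i < ?n + 1 - r" for i
  proof -
    have i: "i \<in> {1..?n}" "\<not> i \<le> d1" "i \<le> d1 + k" "?n + 1 - i > r" using that ld rd kk d1 d2 by auto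
    have "lift d1 d2 k \<rho> i - lift d1 d2 k \<sigma> i = 0" using i s1 s2 that by (simp add: lift_def)
    then show ?thesis using eq i Z[OF i(1)] by (simp add: zrow_def)
  qed
  have const: "E p = E l" if "l \<le> p" "p \<le> ?n + 1 - r" for p
    by (rule linear_const[where a = l and b = "?n + 1 - r" and E = E, OF lin q]) (use that in auto)
  define s where "s = E l"
  define c where "c = (\<lambda>j. E (?n + 1 - j))"
  have Sv: "svec d1 d2 k l r E c s j = E j" if "j \<in> {1..?n}" for j
  proof -
    have j: "1 \<le> j" "j \<le> ?n" using that by auto
    show ?thesis
    proof (cases "j \<le> l - 1")
      case True then show ?thesis unfolding svec_def by simp
    next
      case F1: False
      show ?thesis
      proof (cases "?n + 1 - j \<le> r - 1")
        case True
        have "?n + 1 - (?n + 1 - j) = j" using j by simp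
        then show ?thesis using F1 True unfolding svec_def c_def by simp
      next
        case False
        have "l \<le> j" "j \<le> ?n + 1 - r" using F1 False ld d1 j by auto
        then have "E j = E l" by (rule const)
        then show ?thesis using F1 False unfolding svec_def s_def by simp
      qed
    qed
  qed
  have eqS: "\<forall>i\<in>{1..?n}. lift d1 d2 k \<rho> i - lift d1 d2 k \<sigma> i =
               (\<Sum>j\<in>{1..?n}. Zmat C1 d1 C2 d2 k i j * svec d1 d2 k l r E c s j)"
    using eq Sv by simp
  have LR: "(\<forall>i\<in>{1..l}. fst \<rho> i - fst \<sigma> i = xrowL C1 d1 (bvec l E s) i) \<and>
          (\<forall>i\<in>{1..r}. snd \<rho> i - snd \<sigma> i = xrowL C2 d2 (bvec r c s) i)"
    using EQ[OF s1 s2, of C1 C2 E c s] eqS by blast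
  have allk: "\<forall>i\<in>{1..d1 + d2 + k'}. lift d1 d2 k' \<rho> i - lift d1 d2 k' \<sigma> i =
               (\<Sum>j\<in>{1..d1 + d2 + k'}. Zmat C1 d1 C2 d2 k' i j * svec d1 d2 k' l r E c s j)"
    if "l + r - d1 - d2 \<le> k'" for k'
  proof -
    interpret E': eqsetup d1 d2 k' l r by unfold_locales (use d1 d2 ld rd that in auto)
    show ?thesis using E'.EQ[OF s1 s2, of C1 C2 E c s] LR by blast
  qed
  have fin: "finite {i. fst \<rho> i \<noteq> 0}" "finite {i. fst \<sigma> i \<noteq> 0}" "finite {i. snd \<rho> i \<noteq> 0}" "finite {i. snd \<sigma> i \<noteq> 0}"
    using rho sig unfolding H2plus_def H1plus_def by auto
  have el: "ell (fst \<rho>) \<le> l" "ell (fst \<sigma>) \<le> l" "ell (snd \<rho>) \<le> r" "ell (snd \<sigma>) \<le> r"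
    unfolding lD rD ls_def rs_def by auto
  have n1: "(\<Sum>i\<in>{1..l}. (fst \<rho> i - fst \<sigma> i) * a1 i) = Delta C1 d1 * s"
    by (rule left_norm[OF d1 e1 aok1 ld, where B = "bvec l E s"]) (use s1 LR ld d1 in \<open>auto simp: bvec_def\<close>)
  have n2: "(\<Sum>i\<in>{1..r}. (snd \<rho> i - snd \<sigma> i) * a2 i) = Delta C2 d2 * s"
    by (rule left_norm[OF d2 e2 aok2 rd, where B = "bvec r c s"]) (use s2 LR rd d2 in \<open>auto simp: bvec_def\<close>)
  have "gnorm C1 d1 C2 d2 a1 a2 \<rho> - gnorm C1 d1 C2 d2 a1 a2 \<sigma> =
     Delta C2 d2 * (\<Sum>i\<in>{1..l}. (fst \<rho> i - fst \<sigma> i) * a1 i) - Delta C1 d1 * (\<Sum>i\<in>{1..r}. (snd \<rho> i - snd \<sigma> i) * a2 i)"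
    unfolding gnorm_def sum_ell[OF fin(1) el(1)] sum_ell[OF fin(2) el(2)] sum_ell[OF fin(3) el(3)] sum_ell[OF fin(4) el(4)]
    by (simp add: algebra_simps sum_subtractf)
  also have "\<dots> = 0" unfolding n1 n2 by simp
  finally have gn: "gnorm C1 d1 C2 d2 a1 a2 \<rho> = gnorm C1 d1 C2 d2 a1 a2 \<sigma>" by simp
  have bpos: "\<forall>i\<in>{1..l - 1}. E i \<ge> 0" using Epos kk rd d2 by auto
  have cpos: "\<forall>j\<in>{1..r - 1}. c j \<ge> 0"
  proof
    fix j assume "j \<in> {1..r - 1}"
    then have "?n + 1 - j \<in> {1..?n}" using kk ld d1 by auto
    then show "c j \<ge> 0" using Epos unfolding c_def by blast
  qed
  have spos: "s \<ge> 0" using Epos kk ld d1 rd d2 unfolding s_def by auto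
  show ?thesis unfolding succeq_unfold
    using rho sig gn bpos cpos spos allk unfolding lD[symmetric] rD[symmetric] by blast
qed

end



lemma svec_nonneg:
  assumes "\<forall>i\<in>{1..l - 1}. b i \<ge> 0" "\<forall>j\<in>{1..r - 1}. c j \<ge> 0" "s \<ge> 0" "j \<in> {1..d1 + d2 + k}"
  shows "svec d1 d2 k l r b c s j \<ge> 0"
  using assms unfolding svec_def by auto

lemma sum_Z_lin:
  "(\<Sum>j\<in>A. Z j * (e j + e' j - f j)) = (\<Sum>j\<in>A. Z j * e j) + (\<Sum>j\<in>A. Z j * e' j) - (\<Sum>j\<in>A. Z j * f j)"
  for Z e e' f :: "nat \<Rightarrow> int"
  by (simp add: algebra_simps sum.distrib sum_subtractf)

locale mctx = ctx +
  fixes lam1 lam2 :: "(nat \<Rightarrow> int) \<times> (nat \<Rightarrow> int)"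
  assumes L1: "lam1 \<in> H2plus" and L2: "lam2 \<in> H2plus"
    and S12: "succeq C1 d1 C2 d2 a1 a2 lam1 lam2"
begin

definition "l0 = max (ls d1 lam1) (ls d1 lam2)"
definition "r0 = max (rs d2 lam1) (rs d2 lam2)"

definition "P0 b c s \<longleftrightarrow> (\<forall>i\<in>{1..l0 - 1}. b i \<ge> 0) \<and> (\<forall>j\<in>{1..r0 - 1}. c j \<ge> 0) \<and> s \<ge> 0 \<and>
        (\<forall>k. l0 + r0 - d1 - d2 \<le> k \<longrightarrow>
          (\<forall>i\<in>{1..d1 + d2 + k}. lift d1 d2 k lam1 i - lift d1 d2 k lam2 i =
              (\<Sum>j\<in>{1..d1 + d2 + k}. Zmat C1 d1 C2 d2 k i j * svec d1 d2 k l0 r0 b c s j)))"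

definition "bcs0 = (SOME x. P0 (fst x) (fst (snd x)) (snd (snd x)))"
definition "b0 = fst bcs0"
definition "c0 = fst (snd bcs0)"
definition "s0 = snd (snd bcs0)"

lemma P0: "P0 b0 c0 s0"
proof -
  have "\<exists>b c s. P0 b c s" using S12 unfolding succeq_unfold P0_def l0_def r0_def by blast
  then have "\<exists>x. P0 (fst x) (fst (snd x)) (snd (snd x))" by auto
  then have "P0 (fst bcs0) (fst (snd bcs0)) (snd (snd bcs0))" unfolding bcs0_def by (rule someI_ex)
  then show ?thesis unfolding b0_def c0_def s0_def .
qed

lemma s0: "s0 \<ge> 0" and b0: "\<forall>i\<in>{1..l0 - 1}. b0 i \<ge> 0" and c0: "\<forall>j\<in>{1..r0 - 1}. c0 j \<ge> 0"
  using P0 unfolding P0_def by auto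

abbreviation "F k \<equiv> svec d1 d2 k l0 r0 b0 c0 s0"

lemma F0: "l0 + r0 \<le> d1 + d2 + k \<Longrightarrow> \<forall>i\<in>{1..d1 + d2 + k}. lift d1 d2 k lam1 i - lift d1 d2 k lam2 i =
              (\<Sum>j\<in>{1..d1 + d2 + k}. Zmat C1 d1 C2 d2 k i j * F k j)"
  using P0 unfolding P0_def by auto

lemma l0d: "l0 \<ge> d1" and r0d: "r0 \<ge> d2"
  unfolding l0_def r0_def ls_def rs_def by auto

definition "SS = nat s0"
definition "LB = l0 + SS"
definition "RB = r0 + SS"
definition "Kz = nat \<bar>detm (d1 - 1) C1 * Delta C2 d2 + detm d2 C2 * Delta C1 d1\<bar> + 1"
definition "K0 = Kz + LB + RB"

lemma s0S: "s0 = int SS" unfolding SS_def using s0 by simp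

lemma K1:
  fixes e e' :: "nat \<Rightarrow> int"
  assumes k: "k \<ge> K0"
    and eq1: "\<forall>i\<in>{1..d1 + d2 + k}. lift d1 d2 k lam1 i - \<beta> i = (\<Sum>j\<in>{1..d1 + d2 + k}. Zmat C1 d1 C2 d2 k i j * e j)"
    and eq2: "\<forall>i\<in>{1..d1 + d2 + k}. \<beta> i - lift d1 d2 k lam2 i = (\<Sum>j\<in>{1..d1 + d2 + k}. Zmat C1 d1 C2 d2 k i j * e' j)"
  shows "\<forall>j\<in>{1..d1 + d2 + k}. e j + e' j = F k j"
proof -
  let ?n = "d1 + d2 + k"
  have kz: "int k > \<bar>detm (d1 - 1) C1 * Delta C2 d2 + detm d2 C2 * Delta C1 d1\<bar>"
    using k unfolding K0_def Kz_def by linarith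
  have ln: "l0 + r0 \<le> ?n" using k unfolding K0_def LB_def RB_def by simp
  have "\<forall>i\<in>{1..?n}. (\<Sum>j\<in>{1..?n}. Zmat C1 d1 C2 d2 k i j * (e j + e' j - F k j)) = 0"
  proof
    fix i assume i: "i \<in> {1..?n}"
    show "(\<Sum>j\<in>{1..?n}. Zmat C1 d1 C2 d2 k i j * (e j + e' j - F k j)) = 0"
      unfolding sum_Z_lin using eq1[rule_format, OF i] eq2[rule_format, OF i] F0[OF ln, rule_format, OF i]
      by simp
  qed
  from Z_kernel[OF d1 d2 e1 e2 kz this] show ?thesis by simp
qed

lemma F_mid: "l0 \<le> j \<Longrightarrow> j \<le> d1 + d2 + k + 1 - r0 \<Longrightarrow> F k j = s0"
  using l0d r0d d1 d2 unfolding svec_def by auto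

definition "recon k \<beta> = ((\<lambda>i. if 1 \<le> i \<and> i \<le> LB then \<beta> i else 0),
                          (\<lambda>j. if 1 \<le> j \<and> j \<le> RB then \<beta> (d1 + d2 + k + 1 - j) else 0))"

lemma M:
  fixes e e' \<beta> :: "nat \<Rightarrow> int"
  assumes k: "k \<ge> K0"
    and b_out: "\<forall>i. i \<notin> {1..d1 + d2 + k} \<longrightarrow> \<beta> i = 0" and b_pos: "\<forall>i\<in>{1..d1 + d2 + k}. \<beta> i \<ge> 0"
    and epos: "\<forall>j\<in>{1..d1 + d2 + k}. e j \<ge> 0" and e'pos: "\<forall>j\<in>{1..d1 + d2 + k}. e' j \<ge> 0"
    and eq1: "\<forall>i\<in>{1..d1 + d2 + k}. lift d1 d2 k lam1 i - \<beta> i = (\<Sum>j\<in>{1..d1 + d2 + k}. Zmat C1 d1 C2 d2 k i j * e j)"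
    and eq2: "\<forall>i\<in>{1..d1 + d2 + k}. \<beta> i - lift d1 d2 k lam2 i = (\<Sum>j\<in>{1..d1 + d2 + k}. Zmat C1 d1 C2 d2 k i j * e' j)"
  shows "(\<forall>i. LB < i \<and> i < d1 + d2 + k + 1 - RB \<longrightarrow> \<beta> i = 0)"
    and "recon k \<beta> \<in> Iset C1 d1 C2 d2 a1 a2 lam1 lam2"
    and "lift d1 d2 k (recon k \<beta>) = \<beta>"
proof -
  let ?n = "d1 + d2 + k"
  have big: "LB + RB \<le> ?n" "l0 + r0 + 2 * SS \<le> ?n" using k unfolding K0_def LB_def RB_def by auto
  have sum1: "\<forall>j\<in>{1..?n}. e j + e' j = F k j" by (rule K1[OF k eq1 eq2])
  have l1: "l0 \<ge> 1" "r0 \<ge> 1" using l0d r0d d1 d2 by auto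
  have lam1z: "lift d1 d2 k lam1 p = 0" if "l0 < p" "p < ?n + 1 - r0" for p
  proof -
    have "ls d1 lam1 < p" "rs d2 lam1 < ?n + 1 - p" using that unfolding l0_def r0_def by auto
    then show ?thesis using H2_fst[OF L1] H2_snd[OF L1] by (simp add: lift_def)
  qed
  have cvx: "e (p - 1) + e (p + 1) - 2 * e p \<ge> 0" if "l0 < p" "p < ?n + 1 - r0" for p
  proof -
    have pi: "p \<in> {1..?n}" "\<not> p \<le> d1" "p \<le> d1 + k" using that l0d r0d d1 d2 by auto
    have "(\<Sum>j\<in>{1..?n}. Zmat C1 d1 C2 d2 k p j * e j) = zrow C1 d1 C2 d2 k e p" by (rule Zrow[OF d1 d2 pi(1)])
    then have "lift d1 d2 k lam1 p - \<beta> p = 2 * e p - e (p - 1) - e (p + 1)"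
      using eq1 pi by (simp add: zrow_def)
    moreover have "\<beta> p \<ge> 0" using b_pos pi(1) by blast
    ultimately show ?thesis using lam1z[OF that] by simp
  qed
  have ebd: "0 \<le> e p \<and> e p \<le> int SS" if "l0 \<le> p" "p \<le> ?n + 1 - r0" for p
  proof -
    have pi: "p \<in> {1..?n}" using that l1 by auto
    have "F k p = s0" by (rule F_mid[OF that])
    then show ?thesis using sum1 epos e'pos pi s0S by force
  qed
  have flat: "e (p + 1) = e p" if "l0 + SS \<le> p" "p + 1 + SS \<le> ?n + 1 - r0" for p
    by (rule convex_flat[where a = l0 and b = "?n + 1 - r0" and S = SS and e = e, OF cvx ebd that]) auto
  show mid: "\<forall>i. LB < i \<and> i < ?n + 1 - RB \<longrightarrow> \<beta> i = 0"
  proof (intro allI impI)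
    fix i assume i: "LB < i \<and> i < ?n + 1 - RB"
    have f1: "e (i - 1 + 1) = e (i - 1)" by (rule flat) (use i in \<open>auto simp: LB_def RB_def\<close>)
    have f2: "e (i + 1) = e i" by (rule flat) (use i in \<open>auto simp: LB_def RB_def\<close>)
    have "e (p - 1) + e (p + 1) - 2 * e p = \<beta> p" if "l0 < p" "p < ?n + 1 - r0" for p
    proof -
      have pi: "p \<in> {1..?n}" "\<not> p \<le> d1" "p \<le> d1 + k" using that l0d r0d d1 d2 by auto
      have "(\<Sum>j\<in>{1..?n}. Zmat C1 d1 C2 d2 k p j * e j) = zrow C1 d1 C2 d2 k e p" by (rule Zrow[OF d1 d2 pi(1)])
      then have "lift d1 d2 k lam1 p - \<beta> p = 2 * e p - e (p - 1) - e (p + 1)"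
        using eq1 pi by (simp add: zrow_def)
      then show ?thesis using lam1z[OF that] by simp
    qed
    moreover have "l0 < i" "i < ?n + 1 - r0" using i unfolding LB_def RB_def by auto
    ultimately have "e (i - 1) + e (i + 1) - 2 * e i = \<beta> i" by blast
    moreover have "i - 1 + 1 = i" using i by simp
    ultimately show "\<beta> i = 0" using f1 f2 by simp
  qed
  define \<gamma> where "\<gamma> = recon k \<beta>"
  have fg: "fst \<gamma> = (\<lambda>i. if 1 \<le> i \<and> i \<le> LB then \<beta> i else 0)"
    and sg: "snd \<gamma> = (\<lambda>j. if 1 \<le> j \<and> j \<le> RB then \<beta> (?n + 1 - j) else 0)"
    unfolding \<gamma>_def recon_def by simp_all
  have gH: "\<gamma> \<in> H2plus"
  proof -
    have "fst \<gamma> \<in> H1plus" unfolding H1plus_def fg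
      by (auto intro: finite_subset[of _ "{1..LB}"] simp: b_pos) (use b_pos big in \<open>auto\<close>)
    moreover have "snd \<gamma> \<in> H1plus" unfolding H1plus_def sg
    proof (intro CollectI conjI allI)
      show "finite {i. (if 1 \<le> i \<and> i \<le> RB then \<beta> (?n + 1 - i) else 0) \<noteq> 0}"
        by (rule finite_subset[of _ "{1..RB}"]) auto
    next
      fix i
      show "0 \<le> (if 1 \<le> i \<and> i \<le> RB then \<beta> (?n + 1 - i) else 0)"
      proof (cases "1 \<le> i \<and> i \<le> RB")
        case True
        then have "?n + 1 - i \<in> {1..?n}" using big by auto
        then show ?thesis using True b_pos by simp
      next
        case False
        then show ?thesis by (subst if_not_P) auto
      qed
    qed simp
    ultimately show ?thesis unfolding H2plus_def by (cases \<gamma>) auto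
  qed
  show lg: "lift d1 d2 k (recon k \<beta>) = \<beta>"
  proof
    fix i
    show "lift d1 d2 k (recon k \<beta>) i = \<beta> i"
    proof (cases "i \<in> {1..?n}")
      case False
      then have "lift d1 d2 k (recon k \<beta>) i = 0" "\<beta> i = 0" using b_out unfolding lift_def by auto
      then show ?thesis by simp
    next
      case True
      consider "i \<le> LB" | "LB < i" "i < ?n + 1 - RB" | "?n + 1 - RB \<le> i" by linarith
      then show ?thesis
      proof cases
        case 1
        then have "\<not> (?n + 1 - i \<le> RB)" using big True by auto
        then show ?thesis using 1 True by (simp add: lift_def recon_def)
      next
        case 2
        then have "\<not> (?n + 1 - i \<le> RB)" "\<not> i \<le> LB" using big True by auto
        then show ?thesis using 2 True mid by (simp add: lift_def recon_def)
      next
        case 3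
        then have "?n + 1 - i \<le> RB" "\<not> i \<le> LB" "1 \<le> ?n + 1 - i" "?n + 1 - (?n + 1 - i) = i" using big True by auto
        then show ?thesis using 3 True by (simp add: lift_def recon_def)
      qed
    qed
  qed
  have lsg: "ls d1 \<gamma> \<le> LB"
  proof -
    have "ell (fst \<gamma>) \<le> LB" by (rule ell_le) (simp add: fg)
    then show ?thesis using l0d unfolding ls_def LB_def by simp
  qed
  have rsg: "rs d2 \<gamma> \<le> RB"
  proof -
    have "ell (snd \<gamma>) \<le> RB" by (rule ell_le) (simp add: sg)
    then show ?thesis using r0d unfolding rs_def RB_def by simp
  qed
  have lsl: "ls d1 lam1 \<le> LB" "ls d1 lam2 \<le> LB" "rs d2 lam1 \<le> RB" "rs d2 lam2 \<le> RB"
    unfolding LB_def RB_def l0_def r0_def by auto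
  have flatLB: "e LB = e (LB + 1)" using flat[of LB] big unfolding LB_def RB_def by simp
  have sc1: "succeq C1 d1 C2 d2 a1 a2 lam1 \<gamma>"
  proof (rule G[OF L1 gH refl refl _ epos _ _ _ flatLB])
    show "max (ls d1 lam1) (ls d1 \<gamma>) + max (rs d2 lam1) (rs d2 \<gamma>) \<le> ?n" using lsl lsg rsg big by simp
    show "\<forall>i\<in>{1..?n}. lift d1 d2 k lam1 i - lift d1 d2 k \<gamma> i = (\<Sum>j\<in>{1..?n}. Zmat C1 d1 C2 d2 k i j * e j)"
      using eq1 lg unfolding \<gamma>_def by simp
    show "max (ls d1 lam1) (ls d1 \<gamma>) \<le> LB" using lsl lsg by simp
    show "LB + 1 \<le> ?n + 1 - max (rs d2 lam1) (rs d2 \<gamma>)" using lsl rsg big by simp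
  qed
  have flatLB': "e' LB = e' (LB + 1)"
  proof -
    have "F k LB = s0" "F k (LB + 1) = s0" by (rule F_mid, use big in \<open>auto simp: LB_def RB_def\<close>)+
    moreover have "LB \<in> {1..?n}" "LB + 1 \<in> {1..?n}" using big l1 unfolding LB_def RB_def by auto
    moreover have "e LB + e' LB = F k LB" "e (LB + 1) + e' (LB + 1) = F k (LB + 1)"
      using sum1 calculation(3,4) by blast+
    ultimately show ?thesis using flatLB by linarith
  qed
  have sc2: "succeq C1 d1 C2 d2 a1 a2 \<gamma> lam2"
  proof (rule G[OF gH L2 refl refl _ e'pos _ _ _ flatLB'])
    show "max (ls d1 \<gamma>) (ls d1 lam2) + max (rs d2 \<gamma>) (rs d2 lam2) \<le> ?n" using lsl lsg rsg big by simp
    show "\<forall>i\<in>{1..?n}. lift d1 d2 k \<gamma> i - lift d1 d2 k lam2 i = (\<Sum>j\<in>{1..?n}. Zmat C1 d1 C2 d2 k i j * e' j)"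
      using eq2 lg unfolding \<gamma>_def by simp
    show "max (ls d1 \<gamma>) (ls d1 lam2) \<le> LB" using lsl lsg by simp
    show "LB + 1 \<le> ?n + 1 - max (rs d2 \<gamma>) (rs d2 lam2)" using lsl rsg big by simp
  qed
  show "recon k \<beta> \<in> Iset C1 d1 C2 d2 a1 a2 lam1 lam2"
    unfolding Iset_def \<gamma>_def[symmetric] using gH sc1 sc2 by simp
qed

end



context mctx
begin

lemma succ_eq:
  assumes "succeq C1 d1 C2 d2 a1 a2 \<rho> \<sigma>"
    and "max (ls d1 \<rho>) (ls d1 \<sigma>) + max (rs d2 \<rho>) (rs d2 \<sigma>) \<le> d1 + d2 + k"
  shows "\<exists>E. (\<forall>j\<in>{1..d1 + d2 + k}. E j \<ge> 0) \<and>
     (\<forall>i\<in>{1..d1 + d2 + k}. lift d1 d2 k \<rho> i - lift d1 d2 k \<sigma> i = (\<Sum>j\<in>{1..d1 + d2 + k}. Zmat C1 d1 C2 d2 k i j * E j))"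
proof -
  obtain b c s where bcs: "\<forall>i\<in>{1..max (ls d1 \<rho>) (ls d1 \<sigma>) - 1}. b i \<ge> 0"
    "\<forall>j\<in>{1..max (rs d2 \<rho>) (rs d2 \<sigma>) - 1}. c j \<ge> 0" "s \<ge> 0"
    "\<forall>k. max (ls d1 \<rho>) (ls d1 \<sigma>) + max (rs d2 \<rho>) (rs d2 \<sigma>) - d1 - d2 \<le> k \<longrightarrow>
          (\<forall>i\<in>{1..d1 + d2 + k}. lift d1 d2 k \<rho> i - lift d1 d2 k \<sigma> i =
              (\<Sum>j\<in>{1..d1 + d2 + k}. Zmat C1 d1 C2 d2 k i j *
                 svec d1 d2 k (max (ls d1 \<rho>) (ls d1 \<sigma>)) (max (rs d2 \<rho>) (rs d2 \<sigma>)) b c s j))"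
    using assms(1) unfolding succeq_unfold by blast
  have "max (ls d1 \<rho>) (ls d1 \<sigma>) + max (rs d2 \<rho>) (rs d2 \<sigma>) - d1 - d2 \<le> k" using assms(2) by simp
  then show ?thesis using bcs(4) svec_nonneg[OF bcs(1-3)] by blast
qed

lemma lift_nonneg: "g \<in> H2plus \<Longrightarrow> lift d1 d2 k g i \<ge> 0"
  unfolding lift_def H2plus_def H1plus_def by (cases g) auto

lemma bound:
  assumes g: "\<gamma> \<in> Iset C1 d1 C2 d2 a1 a2 lam1 lam2"
  shows "ls d1 \<gamma> \<le> LB" "rs d2 \<gamma> \<le> RB"
proof -
  have gH: "\<gamma> \<in> H2plus" and sc1: "succeq C1 d1 C2 d2 a1 a2 lam1 \<gamma>" and sc2: "succeq C1 d1 C2 d2 a1 a2 \<gamma> lam2"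
    using g unfolding Iset_def by auto
  define k where "k = K0 + ls d1 \<gamma> + rs d2 \<gamma> + l0 + r0"
  let ?n = "d1 + d2 + k"
  have lsl: "ls d1 lam1 \<le> l0" "ls d1 lam2 \<le> l0" "rs d2 lam1 \<le> r0" "rs d2 lam2 \<le> r0"
    unfolding l0_def r0_def by auto
  have kK: "k \<ge> K0" unfolding k_def by simp
  have big: "LB + RB + ls d1 \<gamma> + rs d2 \<gamma> \<le> ?n" unfolding k_def K0_def by simp
  have p1: "max (ls d1 lam1) (ls d1 \<gamma>) + max (rs d2 lam1) (rs d2 \<gamma>) \<le> ?n"
    and p2: "max (ls d1 \<gamma>) (ls d1 lam2) + max (rs d2 \<gamma>) (rs d2 lam2) \<le> ?n"
    using lsl unfolding k_def by auto
  obtain e where e: "\<forall>j\<in>{1..?n}. e j \<ge> 0"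
    "\<forall>i\<in>{1..?n}. lift d1 d2 k lam1 i - lift d1 d2 k \<gamma> i = (\<Sum>j\<in>{1..?n}. Zmat C1 d1 C2 d2 k i j * e j)"
    using succ_eq[OF sc1 p1] by blast
  obtain e' where e': "\<forall>j\<in>{1..?n}. e' j \<ge> 0"
    "\<forall>i\<in>{1..?n}. lift d1 d2 k \<gamma> i - lift d1 d2 k lam2 i = (\<Sum>j\<in>{1..?n}. Zmat C1 d1 C2 d2 k i j * e' j)"
    using succ_eq[OF sc2 p2] by blast
  have bo: "\<forall>i. i \<notin> {1..?n} \<longrightarrow> lift d1 d2 k \<gamma> i = 0" by (simp add: lift_def)
  have bp: "\<forall>i\<in>{1..?n}. lift d1 d2 k \<gamma> i \<ge> 0" using lift_nonneg[OF gH] by simp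
  have mid: "\<forall>i. LB < i \<and> i < ?n + 1 - RB \<longrightarrow> lift d1 d2 k \<gamma> i = 0"
    by (rule M(1)[OF kK bo bp e(1) e'(1) e(2) e'(2)])
  have f0: "fst \<gamma> i = 0" if "LB < i" for i
  proof (cases "ls d1 \<gamma> < i")
    case True then show ?thesis by (rule H2_fst[OF gH])
  next
    case False
    then have i: "i \<in> {1..?n}" "LB < i \<and> i < ?n + 1 - RB" "rs d2 \<gamma> < ?n + 1 - i" using that big by auto
    have "snd \<gamma> (?n + 1 - i) = 0" by (rule H2_snd[OF gH i(3)])
    moreover have "lift d1 d2 k \<gamma> i = fst \<gamma> i + snd \<gamma> (?n + 1 - i)" using i(1) by (simp add: lift_def)
    moreover have "lift d1 d2 k \<gamma> i = 0" using mid i(2) by blast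
    ultimately show ?thesis by simp
  qed
  have "ell (fst \<gamma>) \<le> LB" by (rule ell_le) (use f0 in auto)
  then show "ls d1 \<gamma> \<le> LB" using l0d unfolding ls_def LB_def by simp
  have s0: "snd \<gamma> j = 0" if "RB < j" for j
  proof (cases "rs d2 \<gamma> < j")
    case True then show ?thesis by (rule H2_snd[OF gH])
  next
    case False
    then have i: "?n + 1 - j \<in> {1..?n}" "LB < ?n + 1 - j \<and> ?n + 1 - j < ?n + 1 - RB" "ls d1 \<gamma> < ?n + 1 - j"
      "?n + 1 - (?n + 1 - j) = j" using that big by auto
    have "fst \<gamma> (?n + 1 - j) = 0" by (rule H2_fst[OF gH i(3)])
    moreover have "lift d1 d2 k \<gamma> (?n + 1 - j) = fst \<gamma> (?n + 1 - j) + snd \<gamma> j" using i(1) i(4) by (simp add: lift_def)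
    moreover have "lift d1 d2 k \<gamma> (?n + 1 - j) = 0" using mid i(2) by blast
    ultimately show ?thesis by simp
  qed
  have "ell (snd \<gamma>) \<le> RB" by (rule ell_le) (use s0 in auto)
  then show "rs d2 \<gamma> \<le> RB" using r0d unfolding rs_def RB_def by simp
qed

lemma part_sup:
  assumes k: "k \<ge> K0" and g: "\<gamma> \<in> Iset C1 d1 C2 d2 a1 a2 lam1 lam2"
  shows "lift d1 d2 k \<gamma> \<in> Ik C1 d1 C2 d2 k lam1 lam2"
proof -
  have gH: "\<gamma> \<in> H2plus" and sc1: "succeq C1 d1 C2 d2 a1 a2 lam1 \<gamma>" and sc2: "succeq C1 d1 C2 d2 a1 a2 \<gamma> lam2"
    using g unfolding Iset_def by auto
  let ?n = "d1 + d2 + k"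
  have lsl: "ls d1 lam1 \<le> LB" "ls d1 lam2 \<le> LB" "rs d2 lam1 \<le> RB" "rs d2 lam2 \<le> RB"
    unfolding l0_def r0_def LB_def RB_def by auto
  have big: "LB + RB \<le> ?n" using k unfolding K0_def by simp
  note bd = bound[OF g]
  have p1: "max (ls d1 lam1) (ls d1 \<gamma>) + max (rs d2 lam1) (rs d2 \<gamma>) \<le> ?n"
    and p2: "max (ls d1 \<gamma>) (ls d1 lam2) + max (rs d2 \<gamma>) (rs d2 lam2) \<le> ?n"
    using lsl bd big by auto
  obtain e where e: "\<forall>j\<in>{1..?n}. e j \<ge> 0"
    "\<forall>i\<in>{1..?n}. lift d1 d2 k lam1 i - lift d1 d2 k \<gamma> i = (\<Sum>j\<in>{1..?n}. Zmat C1 d1 C2 d2 k i j * e j)"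
    using succ_eq[OF sc1 p1] by blast
  obtain e' where e': "\<forall>j\<in>{1..?n}. e' j \<ge> 0"
    "\<forall>i\<in>{1..?n}. lift d1 d2 k \<gamma> i - lift d1 d2 k lam2 i = (\<Sum>j\<in>{1..?n}. Zmat C1 d1 C2 d2 k i j * e' j)"
    using succ_eq[OF sc2 p2] by blast
  have nn: "\<forall>i\<in>{1..?n}. lift d1 d2 k \<gamma> i \<ge> 0" using lift_nonneg[OF gH] by blast
  have out: "\<forall>i. i \<notin> {1..?n} \<longrightarrow> lift d1 d2 k \<gamma> i = 0" by (simp add: lift_def)
  have q1: "in_Qplus ?n (Zmat C1 d1 C2 d2 k) (\<lambda>i. lift d1 d2 k lam1 i - lift d1 d2 k \<gamma> i)"
    unfolding in_Qplus_def using e by blast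
  have q2: "in_Qplus ?n (Zmat C1 d1 C2 d2 k) (\<lambda>i. lift d1 d2 k \<gamma> i - lift d1 d2 k lam2 i)"
    unfolding in_Qplus_def using e' by blast
  show ?thesis unfolding Ik_def Let_def using nn out q1 q2 by blast
qed

lemma Ik_coeffs:
  assumes "\<beta> \<in> Ik C1 d1 C2 d2 k lam1 lam2"
  obtains e e' where "\<forall>i. i \<notin> {1..d1 + d2 + k} \<longrightarrow> \<beta> i = 0" "\<forall>i\<in>{1..d1 + d2 + k}. \<beta> i \<ge> 0"
    "\<forall>j\<in>{1..d1 + d2 + k}. e j \<ge> 0" "\<forall>j\<in>{1..d1 + d2 + k}. e' j \<ge> 0"
    "\<forall>i\<in>{1..d1 + d2 + k}. lift d1 d2 k lam1 i - \<beta> i = (\<Sum>j\<in>{1..d1 + d2 + k}. Zmat C1 d1 C2 d2 k i j * e j)"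
    "\<forall>i\<in>{1..d1 + d2 + k}. \<beta> i - lift d1 d2 k lam2 i = (\<Sum>j\<in>{1..d1 + d2 + k}. Zmat C1 d1 C2 d2 k i j * e' j)"
  using assms unfolding Ik_def Let_def in_Qplus_def by blast

lemma part_sub:
  assumes k: "k \<ge> K0" and b: "\<beta> \<in> Ik C1 d1 C2 d2 k lam1 lam2"
  shows "\<beta> \<in> lift d1 d2 k ` Iset C1 d1 C2 d2 a1 a2 lam1 lam2"
proof -
  obtain e e' where h: "\<forall>i. i \<notin> {1..d1 + d2 + k} \<longrightarrow> \<beta> i = 0" "\<forall>i\<in>{1..d1 + d2 + k}. \<beta> i \<ge> 0"
    "\<forall>j\<in>{1..d1 + d2 + k}. e j \<ge> 0" "\<forall>j\<in>{1..d1 + d2 + k}. e' j \<ge> 0"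
    "\<forall>i\<in>{1..d1 + d2 + k}. lift d1 d2 k lam1 i - \<beta> i = (\<Sum>j\<in>{1..d1 + d2 + k}. Zmat C1 d1 C2 d2 k i j * e j)"
    "\<forall>i\<in>{1..d1 + d2 + k}. \<beta> i - lift d1 d2 k lam2 i = (\<Sum>j\<in>{1..d1 + d2 + k}. Zmat C1 d1 C2 d2 k i j * e' j)"
    by (rule Ik_coeffs[OF b])
  note MM = M[OF k h]
  show ?thesis using MM(2) MM(3)[symmetric] by blast
qed

lemma Ik_finite:
  assumes k: "k \<ge> K0"
  shows "finite (Ik C1 d1 C2 d2 k lam1 lam2)"
proof -
  let ?n = "d1 + d2 + k"
  define box where "box = {f :: nat \<Rightarrow> int. \<forall>j. (j \<in> {1..?n} \<longrightarrow> 0 \<le> f j \<and> f j \<le> F k j) \<and> (j \<notin> {1..?n} \<longrightarrow> f j = 0)}"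
  define ext where "ext = (\<lambda>(f :: nat \<Rightarrow> int) j. if j \<in> {1..?n} then f j else 0)"
  define \<Phi> where "\<Phi> = (\<lambda>f i. if i \<in> {1..?n} then lift d1 d2 k lam1 i - (\<Sum>j\<in>{1..?n}. Zmat C1 d1 C2 d2 k i j * f j) else 0)"
  have "box \<subseteq> ext ` (PiE {1..?n} (\<lambda>j. {0..F k j}))"
  proof
    fix f assume f: "f \<in> box"
    have "restrict f {1..?n} \<in> PiE {1..?n} (\<lambda>j. {0..F k j})" using f unfolding box_def by auto
    moreover have "f = ext (restrict f {1..?n})" using f unfolding box_def ext_def by (auto simp: fun_eq_iff)
    ultimately show "f \<in> ext ` (PiE {1..?n} (\<lambda>j. {0..F k j}))" by blast
  qed
  then have fb: "finite box" by (rule finite_subset) (intro finite_imageI finite_PiE; simp)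
  have "Ik C1 d1 C2 d2 k lam1 lam2 \<subseteq> \<Phi> ` box"
  proof
    fix \<beta> assume b: "\<beta> \<in> Ik C1 d1 C2 d2 k lam1 lam2"
    obtain e e' where h: "\<forall>i. i \<notin> {1..?n} \<longrightarrow> \<beta> i = 0" "\<forall>i\<in>{1..?n}. \<beta> i \<ge> 0"
      "\<forall>j\<in>{1..?n}. e j \<ge> 0" "\<forall>j\<in>{1..?n}. e' j \<ge> 0"
      "\<forall>i\<in>{1..?n}. lift d1 d2 k lam1 i - \<beta> i = (\<Sum>j\<in>{1..?n}. Zmat C1 d1 C2 d2 k i j * e j)"
      "\<forall>i\<in>{1..?n}. \<beta> i - lift d1 d2 k lam2 i = (\<Sum>j\<in>{1..?n}. Zmat C1 d1 C2 d2 k i j * e' j)"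
      by (rule Ik_coeffs[OF b])
    have s: "\<forall>j\<in>{1..?n}. e j + e' j = F k j" by (rule K1[OF k h(5) h(6)])
    have "ext e \<in> box" unfolding box_def
    proof (intro CollectI allI conjI impI)
      fix j assume j: "j \<in> {1..?n}"
      then have "e j + e' j = F k j" "e j \<ge> 0" "e' j \<ge> 0" using s h(3) h(4) by blast+
      then show "0 \<le> ext e j" "ext e j \<le> F k j" using j unfolding ext_def by auto
    next
      fix j assume "j \<notin> {1..?n}"
      then show "ext e j = 0" unfolding ext_def by auto
    qed
    moreover have "\<beta> = \<Phi> (ext e)"
    proof
      fix i
      show "\<beta> i = \<Phi> (ext e) i"
      proof (cases "i \<in> {1..?n}")
        case True
        have "(\<Sum>j\<in>{1..?n}. Zmat C1 d1 C2 d2 k i j * ext e j) = (\<Sum>j\<in>{1..?n}. Zmat C1 d1 C2 d2 k i j * e j)"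
          by (rule sum.cong) (auto simp: ext_def)
        moreover have "lift d1 d2 k lam1 i - \<beta> i = (\<Sum>j\<in>{1..?n}. Zmat C1 d1 C2 d2 k i j * e j)"
          using h(5) True by blast
        ultimately show ?thesis using True unfolding \<Phi>_def by simp
      next
        case False
        then have "\<beta> i = 0" "\<Phi> (ext e) i = 0" using h(1) unfolding \<Phi>_def by auto
        then show ?thesis by simp
      qed
    qed
    ultimately show "\<beta> \<in> \<Phi> ` box" by blast
  qed
  then show ?thesis using fb finite_subset by blast
qed

lemma recon_lift:
  assumes g: "\<gamma> \<in> Iset C1 d1 C2 d2 a1 a2 lam1 lam2"
  shows "recon K0 (lift d1 d2 K0 \<gamma>) = \<gamma>"
proof -
  let ?n = "d1 + d2 + K0"
  have gH: "\<gamma> \<in> H2plus" using g unfolding Iset_def by auto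
  note bd = bound[OF g]
  have big: "LB + RB \<le> ?n" unfolding K0_def by simp
  have z: "fst \<gamma> 0 = 0" "snd \<gamma> 0 = 0" using gH unfolding H2plus_def H1plus_def by auto
  have "fst (recon K0 (lift d1 d2 K0 \<gamma>)) = fst \<gamma>"
  proof
    fix i
    show "fst (recon K0 (lift d1 d2 K0 \<gamma>)) i = fst \<gamma> i"
    proof (cases "1 \<le> i \<and> i \<le> LB")
      case True
      then have "i \<in> {1..?n}" "rs d2 \<gamma> < ?n + 1 - i" using big bd by auto
      then show ?thesis using True H2_snd[OF gH] by (simp add: recon_def lift_def)
    next
      case False
      then have "i = 0 \<or> ls d1 \<gamma> < i" using bd by auto
      then have "fst \<gamma> i = 0" using z H2_fst[OF gH] by auto
      moreover have "fst (recon K0 (lift d1 d2 K0 \<gamma>)) i = 0" using False unfolding recon_def by auto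
      ultimately show ?thesis by simp
    qed
  qed
  moreover have "snd (recon K0 (lift d1 d2 K0 \<gamma>)) = snd \<gamma>"
  proof
    fix j
    show "snd (recon K0 (lift d1 d2 K0 \<gamma>)) j = snd \<gamma> j"
    proof (cases "1 \<le> j \<and> j \<le> RB")
      case True
      then have "?n + 1 - j \<in> {1..?n}" "ls d1 \<gamma> < ?n + 1 - j" "?n + 1 - (?n + 1 - j) = j" using big bd by auto
      then show ?thesis using True H2_fst[OF gH] by (simp add: recon_def lift_def)
    next
      case False
      then have "j = 0 \<or> rs d2 \<gamma> < j" using bd by auto
      then have "snd \<gamma> j = 0" using z H2_snd[OF gH] by auto
      moreover have "snd (recon K0 (lift d1 d2 K0 \<gamma>)) j = 0" using False unfolding recon_def by auto
      ultimately show ?thesis by simp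
    qed
  qed
  ultimately show ?thesis by (simp add: prod_eq_iff)
qed

lemma Iset_finite: "finite (Iset C1 d1 C2 d2 a1 a2 lam1 lam2)"
proof -
  have "Iset C1 d1 C2 d2 a1 a2 lam1 lam2 \<subseteq> recon K0 ` Ik C1 d1 C2 d2 K0 lam1 lam2"
  proof
    fix \<gamma> assume g: "\<gamma> \<in> Iset C1 d1 C2 d2 a1 a2 lam1 lam2"
    have "lift d1 d2 K0 \<gamma> \<in> Ik C1 d1 C2 d2 K0 lam1 lam2" by (rule part_sup[OF order_refl g])
    then show "\<gamma> \<in> recon K0 ` Ik C1 d1 C2 d2 K0 lam1 lam2" using recon_lift[OF g] by force
  qed
  moreover have "finite (recon K0 ` Ik C1 d1 C2 d2 K0 lam1 lam2)" using Ik_finite[OF order_refl] by simp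
  ultimately show ?thesis by (rule finite_subset)
qed

lemma main: "finite (Iset C1 d1 C2 d2 a1 a2 lam1 lam2) \<and>
         (\<exists>N. \<forall>k\<ge>N. Ik C1 d1 C2 d2 k lam1 lam2 = lift d1 d2 k ` Iset C1 d1 C2 d2 a1 a2 lam1 lam2)"
proof (intro conjI exI allI impI)
  show "finite (Iset C1 d1 C2 d2 a1 a2 lam1 lam2)" by (rule Iset_finite)
  fix k assume k: "K0 \<le> k"
  show "Ik C1 d1 C2 d2 k lam1 lam2 = lift d1 d2 k ` Iset C1 d1 C2 d2 a1 a2 lam1 lam2"
    using part_sub[OF k] part_sup[OF k] by blast
qed

end

theorem lemma5p13:
  fixes C1 C2 :: "nat \<Rightarrow> nat \<Rightarrow> int" and d1 d2 :: nat and a1 a2 :: "nat \<Rightarrow> int"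
    and lam1 lam2 :: "(nat \<Rightarrow> int) \<times> (nat \<Rightarrow> int)"
  assumes "d1 \<ge> 1" and "d2 \<ge> 1"
    and "sym_gcm C1 d1" and "sym_gcm C2 d2"
    and "extensible_pair C1 d1 C2 d2"
    and "a_seq_ok C1 d1 a1" and "a_seq_ok C2 d2 a2"
    and "lam1 \<in> H2plus" and "lam2 \<in> H2plus"
    and "succeq C1 d1 C2 d2 a1 a2 lam1 lam2"
  shows "finite (Iset C1 d1 C2 d2 a1 a2 lam1 lam2) \<and>
         (\<exists>N. \<forall>k\<ge>N. Ik C1 d1 C2 d2 k lam1 lam2 =
                       lift d1 d2 k ` Iset C1 d1 C2 d2 a1 a2 lam1 lam2)"
proof -
  interpret mctx C1 C2 d1 d2 a1 a2 lam1 lam2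
    by unfold_locales (use assms in auto)
  show ?thesis by (rule main)
qed


end
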